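(* Let $F(x,y)=\left(x+\frac{2y^2(-x^2+x+y^2)}{(x-1-y)(x^2-1+y-y^2)},\ \frac{y^2(x-1+y)}{(x-1-y)(x^2-1+y-y^2)}\right)$ and let $\varpi\colon\mathbb{C}^2\dashrightarrow\mathbb{C}^2$ be the birational map $$\varpi(x,y)=\left(\frac{x^2-1-xy-2y^2}{y},\ \frac{(1+x-2y)(1+x+y)}{2y}\right).$$ Then $\varpi\circ F\circ\varpi^{-1}(u,v)=\left(u^2-u-3,\ \frac{(u-1)(u+2)}{u+3}\,v\right)$. In particular $\psi(x,y)=\frac{x^2-1-xy-2y^2}{y}$ satisfies $\psi\circ F=g\circ\psi$ with $g(u)=u^2-u-3$, and $F$ has topological degree $2$ and first dynamical degree $2$.
   Context: The first dynamical degree is $\lambda_1(F)=\lim_n\deg(F^n)^{1/n}$ with $\deg$ the algebraic degree of the homogeneous extension to $\mathbb{P}^2$; the topological degree is the number of preimages of a generic point. *)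

theory Defs
  imports "HOL-Analysis.Analysis"
begin

definition F_map :: "complex \<times> complex \<Rightarrow> complex \<times> complex" where
  "F_map = (\<lambda>(x, y).
     (x + 2 * y^2 * (x - x^2 + y^2) / ((x - 1 - y) * (x^2 - 1 + y - y^2)),
      y^2 * (x - 1 + y) / ((x - 1 - y) * (x^2 - 1 + y - y^2))))"

definition F_dom :: "(complex \<times> complex) set" where
  "F_dom = {(x, y). (x - 1 - y) * (x^2 - 1 + y - y^2) \<noteq> 0}"

definition varpi :: "complex \<times> complex \<Rightarrow> complex \<times> complex" where
  "varpi = (\<lambda>(x, y). ((x^2 - 1 - x * y - 2 * y^2) / y,
                       (1 + x - 2 * y) * (1 + x + y) / (2 * y)))"

definition varpi_inv :: "complex \<times> complex \<Rightarrow> complex \<times> complex" where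
  "varpi_inv = (\<lambda>(u, v).
     let y = 8 * v / ((2 * v - u - 3) * (2 * v - u + 3))
     in ((2 * v - u + 1) / 2 * y - 1, y))"

definition G_map :: "complex \<times> complex \<Rightarrow> complex \<times> complex" where
  "G_map = (\<lambda>(u, v). (u^2 - u - 3, (u - 1) * (u + 2) / (u + 3) * v))"

definition psi :: "complex \<times> complex \<Rightarrow> complex" where
  "psi = (\<lambda>(x, y). (x^2 - 1 - x * y - 2 * y^2) / y)"

definition g_map :: "complex \<Rightarrow> complex" where
  "g_map u = u^2 - u - 3"

definition holds_generically :: "('a::topological_space \<Rightarrow> bool) \<Rightarrow> bool" where
  "holds_generically P \<longleftrightarrow> (\<exists>U. open U \<and> closure U = UNIV \<and> (\<forall>p\<in>U. P p))"

definition hom_eval :: "nat \<Rightarrow> (nat \<times> nat \<Rightarrow> complex) \<Rightarrow> complex \<Rightarrow> complex \<Rightarrow> complex \<Rightarrow> complex" where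
  "hom_eval d c X Y Z =
     (\<Sum>ij\<in>{(i, j). i + j \<le> d}. c ij * X ^ fst ij * Y ^ snd ij * Z ^ (d - fst ij - snd ij))"

text \<open>Algebraic degree of (the homogeneous extension to P^2 of) a rational map of C^2:
  the least d such that f = [F_X : F_Y : F_Z] with homogeneous F_X, F_Y, F_Z of degree d,
  in the affine chart Z = 1, (x,y) = [x:y:1].  Minimality removes common factors.\<close>
definition alg_deg :: "(complex \<times> complex \<Rightarrow> complex \<times> complex) \<Rightarrow> nat" where
  "alg_deg f = (LEAST d. \<exists>cX cY cZ. holds_generically (\<lambda>(x, y).
       hom_eval d cZ x y 1 \<noteq> 0 \<and>
       f (x, y) = (hom_eval d cX x y 1 / hom_eval d cZ x y 1,
                   hom_eval d cY x y 1 / hom_eval d cZ x y 1)))"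

end

theory Submission
  imports Defs "HOL-Computational_Algebra.Polynomial"
begin

lemma varpi_inv_varpi:
  fixes x y :: complex
  assumes y0: "y \<noteq> 0" and a1: "1 + x - 2*y \<noteq> 0" and a2: "1 + x + y \<noteq> 0"
  shows "varpi_inv (varpi (x,y)) = (x,y)"
proof -
  define u where "u = (x\<^sup>2 - 1 - x * y - 2 * y\<^sup>2) / y"
  define v where "v = (1 + x - 2 * y) * (1 + x + y) / (2 * y)"
  have hu: "u * y = x\<^sup>2 - 1 - x * y - 2 * y\<^sup>2" using y0 unfolding u_def by simp
  have hv: "v * (2 * y) = (1 + x - 2 * y) * (1 + x + y)" using y0 unfolding v_def by simp
  have s1: "(2 * v - u - 3) * y = 2 * (1 + x - 2 * y)" using hu hv by algebra
  have s2: "(2 * v - u + 3) * y = 2 * (1 + x + y)" using hu hv by algebra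
  have n1: "2 * v - u - 3 \<noteq> 0"
  proof
    assume "2 * v - u - 3 = 0"
    with s1 have "2 * (1 + x - 2 * y) = 0" by simp
    thus False using a1 by (simp only: mult_eq_0_iff) simp
  qed
  have n2: "2 * v - u + 3 \<noteq> 0"
  proof
    assume "2 * v - u + 3 = 0"
    with s2 have "2 * (1 + x + y) = 0" by simp
    thus False using a2 by (simp only: mult_eq_0_iff) simp
  qed
  have e: "8 * v = y * ((2 * v - u - 3) * (2 * v - u + 3))"
  proof -
    have "8 * v * (y * y) = y * ((2 * v - u - 3) * (2 * v - u + 3)) * (y * y)"
      using s1 s2 hv by algebra
    thus ?thesis using y0 by simp
  qed
  have eY: "8 * v / ((2 * v - u - 3) * (2 * v - u + 3)) = y" 
  proof -
    have D0: "(2 * v - u - 3) * (2 * v - u + 3) \<noteq> 0" using n1 n2 by simp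
    show ?thesis by (subst e) (simp only: nonzero_mult_div_cancel_right[OF D0])
  qed
  have eX: "(2 * v - u + 1) / 2 * y - 1 = x"
  proof -
    have "(2 * v - u + 1) * y = 2 * x + 2" using hu hv by algebra
    thus ?thesis by (simp add: field_simps)
  qed
  have "varpi (x,y) = (u,v)" by (simp add: varpi_def u_def v_def)
  moreover have "varpi_inv (u,v) = (x,y)" unfolding varpi_inv_def Let_def
    by (simp only: prod.case eY eX)
  ultimately show ?thesis by simp
qed

lemma varpi_varpi_inv:
  fixes u v :: complex
  assumes "v \<noteq> 0" "2 * v - u - 3 \<noteq> 0" "2 * v - u + 3 \<noteq> 0"
  shows "varpi (varpi_inv (u,v)) = (u,v)"
proof -
  define Y where "Y = 8 * v / ((2 * v - u - 3) * (2 * v - u + 3))"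
  define x where "x = (2 * v - u + 1) / 2 * Y - 1"
  have hY: "Y * ((2 * v - u - 3) * (2 * v - u + 3)) = 8 * v" using assms unfolding Y_def by simp
  have Y0: "Y \<noteq> 0" using assms unfolding Y_def by simp
  have hx: "2 * x = (2 * v - u + 1) * Y - 2" unfolding x_def by (simp add: field_simps)
  have g1: "x\<^sup>2 - 1 - x * Y - 2 * Y\<^sup>2 = u * Y" using hY hx by algebra
  have g2: "(1 + x - 2 * Y) * (1 + x + Y) = 2 * Y * v" using hY hx by algebra
  have "varpi_inv (u,v) = (x, Y)" unfolding varpi_inv_def Y_def x_def Let_def by simp
  moreover have "varpi (x,Y) = (u,v)" unfolding varpi_def using g1 g2 Y0
    by (simp add: field_simps)
  ultimately show ?thesis by simp
qed

lemma F_conj_fst: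
  fixes x y :: complex
  assumes y0: "y \<noteq> 0" and d1: "x - 1 - y \<noteq> 0" and d2: "x\<^sup>2 - 1 + y - y\<^sup>2 \<noteq> 0"
    and e0: "x - 1 + y \<noteq> 0"
  shows "fst (varpi (F_map (x,y))) = g_map (fst (varpi (x,y)))"
proof -
  define d where "d = (x - 1 - y) * (x\<^sup>2 - 1 + y - y\<^sup>2)"
  have dn: "d \<noteq> 0" using d1 d2 unfolding d_def by simp
  define P where "P = x * d + 2 * y\<^sup>2 * (x - x\<^sup>2 + y\<^sup>2)"
  define Q where "Q = y\<^sup>2 * (x - 1 + y)"
  have Qn: "Q \<noteq> 0" using y0 e0 unfolding Q_def by simp
  have F: "F_map (x,y) = (P / d, Q / d)" unfolding F_map_def P_def Q_def d_def
    using dn[unfolded d_def] by (simp add: field_simps)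
  define N1 where "N1 = x\<^sup>2 - 1 - x * y - 2 * y\<^sup>2"
  have key: "(P\<^sup>2 - d\<^sup>2 - P * Q - 2 * Q\<^sup>2) * y\<^sup>2 = Q * d * (N1\<^sup>2 - N1 * y - 3 * y\<^sup>2)"
    unfolding P_def Q_def d_def N1_def by algebra
  have "fst (varpi (P/d, Q/d)) = (P\<^sup>2 - d\<^sup>2 - P * Q - 2 * Q\<^sup>2) / (Q * d)"
    unfolding varpi_def using dn Qn by (simp add: field_simps power2_eq_square)
  also have "\<dots> = (N1\<^sup>2 - N1 * y - 3 * y\<^sup>2) / y\<^sup>2"
    using key dn Qn y0 by (simp add: field_simps)
  also have "\<dots> = g_map (N1 / y)" unfolding g_map_def using y0
    by (simp add: field_simps power2_eq_square)
  finally show ?thesis using F by (simp add: varpi_def N1_def)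
qed

lemma F_conj_snd:
  fixes x y :: complex
  assumes y0: "y \<noteq> 0" and d1: "x - 1 - y \<noteq> 0" and d2: "x\<^sup>2 - 1 + y - y\<^sup>2 \<noteq> 0"
    and e0: "x - 1 + y \<noteq> 0" and u3: "fst (varpi (x,y)) + 3 \<noteq> 0"
  shows "snd (varpi (F_map (x,y))) = snd (G_map (varpi (x,y)))"
proof -
  define d where "d = (x - 1 - y) * (x\<^sup>2 - 1 + y - y\<^sup>2)"
  have dn: "d \<noteq> 0" using d1 d2 unfolding d_def by simp
  define P where "P = x * d + 2 * y\<^sup>2 * (x - x\<^sup>2 + y\<^sup>2)"
  define Q where "Q = y\<^sup>2 * (x - 1 + y)"
  have Qn: "Q \<noteq> 0" using y0 e0 unfolding Q_def by simp
  have F: "F_map (x,y) = (P / d, Q / d)" unfolding F_map_def P_def Q_def d_def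
    using dn[unfolded d_def] by (simp add: field_simps)
  define N1 where "N1 = x\<^sup>2 - 1 - x * y - 2 * y\<^sup>2"
  define N2 where "N2 = (1 + x - 2 * y) * (1 + x + y)"
  have n3: "N1 + 3 * y \<noteq> 0" using u3 y0 unfolding varpi_def N1_def by (simp add: field_simps)
  have key: "(d + P - 2 * Q) * (d + P + Q) * y\<^sup>2 * (N1 + 3 * y) = Q * d * (N1 - y) * (N1 + 2 * y) * N2"
    unfolding P_def Q_def d_def N1_def N2_def by algebra
  have "snd (varpi (P/d, Q/d)) = (d + P - 2 * Q) * (d + P + Q) / (2 * Q * d)"
    unfolding varpi_def using dn Qn by (simp add: field_simps power2_eq_square)
  also have "\<dots> = (N1 - y) * (N1 + 2 * y) * N2 / (2 * y\<^sup>2 * (N1 + 3 * y))"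
  proof (subst frac_eq_eq)
    show "2 * Q * d \<noteq> 0" using dn Qn by simp
    show "2 * y\<^sup>2 * (N1 + 3 * y) \<noteq> 0" using y0 n3 by simp
    show "(d + P - 2 * Q) * (d + P + Q) * (2 * y\<^sup>2 * (N1 + 3 * y)) =
      (N1 - y) * (N1 + 2 * y) * N2 * (2 * Q * d)" using key by algebra
  qed
  also have "\<dots> = (N1 / y - 1) * (N1 / y + 2) / (N1 / y + 3) * (N2 / (2 * y))"
  proof -
    have h1: "N1 / y - 1 = (N1 - y) / y" "N1 / y + 2 = (N1 + 2 * y) / y" "N1 / y + 3 = (N1 + 3 * y) / y"
      using y0 by (simp_all add: field_simps)
    show ?thesis unfolding h1 times_divide_times_eq divide_divide_times_eq
    proof (subst frac_eq_eq)
      show "2 * y\<^sup>2 * (N1 + 3 * y) \<noteq> 0" using y0 n3 by simp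
      show "y * y * (N1 + 3 * y) * (2 * y) \<noteq> 0" using y0 n3 by simp
    qed algebra
  qed
  finally show ?thesis using F by (simp add: varpi_def G_map_def N1_def N2_def)
qed

definition Om1 :: "(complex \<times> complex) set" where
  "Om1 = {(x,y). y \<noteq> 0 \<and> 1 + x - 2 * y \<noteq> 0 \<and> 1 + x + y \<noteq> 0}"
definition Om2 :: "(complex \<times> complex) set" where
  "Om2 = {(u,v). v \<noteq> 0 \<and> 2 * v - u - 3 \<noteq> 0 \<and> 2 * v - u + 3 \<noteq> 0}"
definition Rset :: "(complex \<times> complex) set" where
  "Rset = {(u,v). u \<noteq> 1 \<and> u \<noteq> -2 \<and> u \<noteq> -3 \<and> v \<noteq> 0 \<and> 2 * v - u - 3 \<noteq> 0 \<and> 2 * v - u + 3 \<noteq> 0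
     \<and> (2 * v - u) * (u - 1) - u + 9 \<noteq> 0 \<and> (2 * v - u) * (u + 2) - u \<noteq> 0
     \<and> 2 * (u - 1) * (u + 2) * v - (g_map u + 3) * (u + 3) \<noteq> 0
     \<and> 2 * (u - 1) * (u + 2) * v - (g_map u - 3) * (u + 3) \<noteq> 0}"

lemma Om2_varpi_inv: assumes "w \<in> Om2" shows "varpi (varpi_inv w) = w"
  using assms varpi_varpi_inv unfolding Om2_def by auto

lemma Om1_varpi: assumes "p \<in> Om1" shows "varpi_inv (varpi p) = p"
  using assms varpi_inv_varpi unfolding Om1_def by auto

lemma F_step:
  assumes wR: "(u,v) \<in> Rset"
  shows "varpi_inv (u,v) \<in> F_dom \<and> F_map (varpi_inv (u,v)) = varpi_inv (G_map (u,v))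
         \<and> G_map (u,v) \<in> Om2"
proof -
  have R: "u \<noteq> 1" "u \<noteq> -2" "u \<noteq> -3" "v \<noteq> 0" "2 * v - u - 3 \<noteq> 0" "2 * v - u + 3 \<noteq> 0"
     "(2 * v - u) * (u - 1) - u + 9 \<noteq> 0" "(2 * v - u) * (u + 2) - u \<noteq> 0"
     "2 * (u - 1) * (u + 2) * v - (g_map u + 3) * (u + 3) \<noteq> 0"
     "2 * (u - 1) * (u + 2) * v - (g_map u - 3) * (u + 3) \<noteq> 0"
    using wR unfolding Rset_def by auto
  have u3': "u + 3 \<noteq> 0" using R(3) by (simp add: add_eq_0_iff2)
  define Y where "Y = 8 * v / ((2 * v - u - 3) * (2 * v - u + 3))"
  define x where "x = (2 * v - u + 1) / 2 * Y - 1"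
  have hY: "Y * ((2 * v - u - 3) * (2 * v - u + 3)) = 8 * v" using R unfolding Y_def by simp
  have Y0: "Y \<noteq> 0" using R unfolding Y_def by simp
  have hx: "2 * x = (2 * v - u + 1) * Y - 2" unfolding x_def by (simp add: field_simps)
  have q: "varpi_inv (u,v) = (x, Y)" unfolding varpi_inv_def Y_def x_def Let_def by simp
  have vq: "varpi (x, Y) = (u, v)" using varpi_varpi_inv[of v u] R q by simp
  have r1: "(x - 1 - Y) * ((2 * v - u - 3) * (2 * v - u + 3)) = 2 * ((2 * v - u) * (u - 1) - u + 9)"
    using hY hx by algebra
  have D1: "x - 1 - Y \<noteq> 0"
  proof
    assume "x - 1 - Y = 0"
    hence "2 * ((2 * v - u) * (u - 1) - u + 9) = 0" using r1 by simp
    thus False using R(7) by (metis mult_eq_0_iff zero_neq_numeral)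
  qed
  have r2: "(x\<^sup>2 - 1 + Y - Y\<^sup>2) * (2 * v - u - 3) = Y * ((2 * v - u) * (u + 2) - u)"
    using hY hx by algebra
  have D2: "x\<^sup>2 - 1 + Y - Y\<^sup>2 \<noteq> 0" using r2 R(8) Y0 by auto
  have r3: "(x - 1 + Y) * (2 * v - u - 3) = 2 * (u + 3)"
    using hY hx by algebra
  have E: "x - 1 + Y \<noteq> 0"
  proof
    assume "x - 1 + Y = 0"
    hence "2 * (u + 3) = 0" using r3 by simp
    thus False using u3' by (metis mult_eq_0_iff zero_neq_numeral)
  qed
  have u3: "fst (varpi (x, Y)) + 3 \<noteq> 0" using vq u3' by simp
  have c1: "fst (varpi (F_map (x,Y))) = fst (G_map (u,v))"
    using F_conj_fst[OF Y0 D1 D2 E] vq by (simp add: G_map_def g_map_def)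
  have c2: "snd (varpi (F_map (x,Y))) = snd (G_map (u,v))"
    using F_conj_snd[OF Y0 D1 D2 E u3] vq by simp
  have vF: "varpi (F_map (x,Y)) = G_map (u,v)" using c1 c2 by (simp add: prod_eq_iff)
  have GOm: "G_map (u,v) \<in> Om2"
  proof -
    have a: "(u - 1) * (u + 2) / (u + 3) * v \<noteq> 0" using R u3' by (simp add: add_eq_0_iff2)
    have b: "2 * ((u - 1) * (u + 2) / (u + 3) * v) - g_map u - 3 \<noteq> 0"
    proof -
      have "2 * ((u - 1) * (u + 2) / (u + 3) * v) - g_map u - 3 =
        (2 * (u - 1) * (u + 2) * v - (g_map u + 3) * (u + 3)) / (u + 3)"
        using u3' by (simp add: field_simps)
      thus ?thesis using R(9) u3' by simp
    qed
    have c: "2 * ((u - 1) * (u + 2) / (u + 3) * v) - g_map u + 3 \<noteq> 0"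
    proof -
      have "2 * ((u - 1) * (u + 2) / (u + 3) * v) - g_map u + 3 =
        (2 * (u - 1) * (u + 2) * v - (g_map u - 3) * (u + 3)) / (u + 3)"
        using u3' by (simp add: field_simps)
      thus ?thesis using R(10) u3' by simp
    qed
    show ?thesis using a b c unfolding Om2_def G_map_def g_map_def by simp
  qed
  obtain X1 Y1 where FX: "F_map (x,Y) = (X1, Y1)" by fastforce
  have Y1: "Y1 \<noteq> 0"
  proof -
    have "Y1 = Y\<^sup>2 * (x - 1 + Y) / ((x - 1 - Y) * (x\<^sup>2 - 1 + Y - Y\<^sup>2))"
      using FX unfolding F_map_def by simp
    thus ?thesis using Y0 E D1 D2 by simp
  qed
  have "varpi (X1, Y1) \<in> Om2" using vF GOm FX by simp
  hence "(1 + X1 - 2 * Y1) * (1 + X1 + Y1) / (2 * Y1) \<noteq> 0" unfolding varpi_def Om2_def by simp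
  hence "(X1, Y1) \<in> Om1" using Y1 unfolding Om1_def by auto
  hence "F_map (x, Y) = varpi_inv (G_map (u,v))" using Om1_varpi vF FX by metis
  moreover have "(x, Y) \<in> F_dom" using D1 D2 unfolding F_dom_def by simp
  ultimately show ?thesis using q GOm by simp
qed

lemma dense_iff_open_meets:
  fixes S :: "'a::topological_space set"
  shows "closure S = UNIV \<longleftrightarrow> (\<forall>T. open T \<longrightarrow> T \<noteq> {} \<longrightarrow> T \<inter> S \<noteq> {})"
  using dense_intersects_open[of euclidean S] by (auto simp: euclidean_closure_of)

lemma exists_near_avoid:
  fixes a :: complex and X :: "complex set"
  assumes "finite X" "r > 0"
  shows "\<exists>a'. a' \<notin> X \<and> dist a' a < r"
proof -
  define f where "f = (\<lambda>t::real. a + of_real t)"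
  have inj: "inj f" unfolding f_def inj_def by simp
  have "infinite (f ` {0<..<r})" using inj assms(2)
    by (simp add: finite_image_iff inj_on_subset[OF inj])
  then obtain z where z: "z \<in> f ` {0<..<r}" "z \<notin> X"
    using assms(1) by (meson finite_subset subsetI)
  then obtain t where t: "t \<in> {0<..<r}" "z = f t" by auto
  have "dist z a = t" using t unfolding f_def by (simp add: dist_norm)
  thus ?thesis using z t by auto
qed

lemma dense_lines:
  fixes S :: "(complex \<times> complex) set"
  assumes "finite B" "\<And>a. a \<notin> B \<Longrightarrow> finite {b. (a,b) \<notin> S}"
  shows "closure S = UNIV"
  proof (rule set_eqI, simp add: closure_approachable, intro allI impI)
    fix z :: "complex \<times> complex" and e :: real
    assume e: "e > 0"
    obtain a b where z: "z = (a,b)" by fastforce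
    obtain a' where a': "a' \<notin> B" "dist a' a < e / 2" using exists_near_avoid[OF assms(1), of "e/2" a] e by auto
    obtain b' where b': "b' \<notin> {b. (a',b) \<notin> S}" "dist b' b < e / 2"
      using exists_near_avoid[OF assms(2)[OF a'(1)], of "e/2" b] e by auto
    have "dist (a',b') (a,b) \<le> dist a' a + dist b' b"
      by (simp add: dist_Pair_Pair sqrt_sum_squares_le_sum)
    hence "dist (a',b') z < e" using a' b' z by simp
    moreover have "(a',b') \<in> S" using b' by simp
    ultimately show "\<exists>y\<in>S. dist y z < e" by blast
  qed

lemma hg_lines:
  fixes S :: "(complex \<times> complex) set"
  assumes "open S" "finite B" "\<And>a. a \<notin> B \<Longrightarrow> finite {b. (a,b) \<notin> S}" "\<And>p. p \<in> S \<Longrightarrow> P p"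
  shows "holds_generically P"
  unfolding holds_generically_def
proof (intro exI conjI)
  show "open S" by fact
  show "\<forall>p\<in>S. P p" using assms(4) by blast
  show "closure S = UNIV" using dense_lines[OF assms(2,3)] by blast
qed

lemma hg_conj:
  assumes "holds_generically P" "holds_generically Q"
  shows "holds_generically (\<lambda>p. P p \<and> Q p)"
proof -
  obtain U where U: "open U" "closure U = UNIV" "\<forall>p\<in>U. P p" using assms(1) unfolding holds_generically_def by blast
  obtain V where V: "open V" "closure V = UNIV" "\<forall>p\<in>V. Q p" using assms(2) unfolding holds_generically_def by blast
  have "closure (U \<inter> V) = UNIV"
    using open_Int_closure_subset[OF U(1), of V] V(2) U(2) by (metis closure_closure closure_mono inf_top.right_neutral subset_antisym top_greatest)
  thus ?thesis unfolding holds_generically_def using U V by (intro exI[of _ "U \<inter> V"]) auto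
qed

lemma hg_mono:
  assumes "holds_generically P" "\<And>p. P p \<Longrightarrow> Q p"
  shows "holds_generically Q"
  using assms unfolding holds_generically_def by blast

lemma hg_ex:
  assumes "holds_generically (P :: 'a::topological_space \<Rightarrow> bool)"
  shows "\<exists>p. P p"
  using assms unfolding holds_generically_def by (metis closure_empty ex_in_conv UNIV_not_empty)


lemma aff_fin:
  fixes f :: "complex \<Rightarrow> complex"
  assumes "\<And>v. f v = c * v + d" "c \<noteq> 0"
  shows "finite {v. f v = 0}"
proof -
  have "{v. f v = 0} \<subseteq> {- d / c}" using assms by (auto simp: field_simps add_eq_0_iff2)
  thus ?thesis using finite_subset by blast
qed

lemma quad_fin:
  fixes f :: "complex \<Rightarrow> complex"
  assumes "\<And>v. f v = c * v^2 + b * v + d" "c \<noteq> 0"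
  shows "finite {v. f v = 0}"
proof -
  have "{v. f v = 0} = {v. poly [:d, b, c:] v = 0}" using assms(1)
    by (auto simp: algebra_simps power2_eq_square)
  moreover have "[:d, b, c:] \<noteq> 0" using assms(2) by simp
  ultimately show ?thesis using poly_roots_finite[of "[:d, b, c:]"] by argo
qed

lemma varpi_Om2: assumes "p \<in> Om1" shows "varpi p \<in> Om2"
proof -
  obtain x y where p: "p = (x,y)" by fastforce
  have y0: "y \<noteq> 0" and a1: "1 + x - 2*y \<noteq> 0" and a2: "1 + x + y \<noteq> 0" using assms p unfolding Om1_def by auto
  define u where "u = (x\<^sup>2 - 1 - x * y - 2 * y\<^sup>2) / y"
  define v where "v = (1 + x - 2 * y) * (1 + x + y) / (2 * y)"
  have hu: "u * y = x\<^sup>2 - 1 - x * y - 2 * y\<^sup>2" using y0 unfolding u_def by simp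
  have hv: "v * (2 * y) = (1 + x - 2 * y) * (1 + x + y)" using y0 unfolding v_def by simp
  have s1: "(2 * v - u - 3) * y = 2 * (1 + x - 2 * y)" using hu hv by algebra
  have s2: "(2 * v - u + 3) * y = 2 * (1 + x + y)" using hu hv by algebra
  have n1: "2 * v - u - 3 \<noteq> 0"
  proof
    assume "2 * v - u - 3 = 0"
    with s1 have "2 * (1 + x - 2 * y) = 0" by simp
    thus False using a1 by (simp only: mult_eq_0_iff) simp
  qed
  have n2: "2 * v - u + 3 \<noteq> 0"
  proof
    assume "2 * v - u + 3 = 0"
    with s2 have "2 * (1 + x + y) = 0" by simp
    thus False using a2 by (simp only: mult_eq_0_iff) simp
  qed
  have "v \<noteq> 0" using y0 a1 a2 unfolding v_def by simp
  moreover have "varpi p = (u,v)" using p by (simp add: varpi_def u_def v_def)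
  ultimately show ?thesis using n1 n2 unfolding Om2_def by simp
qed

lemma varpi_inv_Om1: assumes "w \<in> Om2" shows "varpi_inv w \<in> Om1"
proof -
  obtain u v where w: "w = (u,v)" by fastforce
  have R: "v \<noteq> 0" "2 * v - u - 3 \<noteq> 0" "2 * v - u + 3 \<noteq> 0" using assms w unfolding Om2_def by auto
  define Y where "Y = 8 * v / ((2 * v - u - 3) * (2 * v - u + 3))"
  define x where "x = (2 * v - u + 1) / 2 * Y - 1"
  have hY: "Y * ((2 * v - u - 3) * (2 * v - u + 3)) = 8 * v" using R unfolding Y_def by simp
  have Y0: "Y \<noteq> 0" using R unfolding Y_def by simp
  have hx: "2 * x = (2 * v - u + 1) * Y - 2" unfolding x_def by (simp add: field_simps)
  have q: "varpi_inv (u,v) = (x, Y)" unfolding varpi_inv_def Y_def x_def Let_def by simp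
  have e1: "2 * (1 + x - 2 * Y) = Y * (2 * v - u - 3)" using hx by algebra
  have e2: "2 * (1 + x + Y) = Y * (2 * v - u + 3)" using hx by algebra
  have "1 + x - 2 * Y \<noteq> 0" using e1 Y0 R by (metis mult_eq_0_iff mult_zero_right)
  moreover have "1 + x + Y \<noteq> 0" using e2 Y0 R by (metis mult_eq_0_iff mult_zero_right)
  ultimately show ?thesis using Y0 q w unfolding Om1_def by simp
qed

lemma open_Om1: "open Om1"
proof -
  have "Om1 = {p. snd p \<noteq> 0} \<inter> {p. 1 + fst p - 2 * snd p \<noteq> 0} \<inter> {p. 1 + fst p + snd p \<noteq> 0}"
    unfolding Om1_def by auto
  show ?thesis unfolding \<open>Om1 = _\<close> by (intro open_Int open_Collect_neq continuous_intros)
qed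

lemma open_Om2: "open Om2"
proof -
  have "Om2 = {p. snd p \<noteq> 0} \<inter> {p. 2 * snd p - fst p - 3 \<noteq> 0} \<inter> {p. 2 * snd p - fst p + 3 \<noteq> 0}"
    unfolding Om2_def by auto
  show ?thesis unfolding \<open>Om2 = _\<close> by (intro open_Int open_Collect_neq continuous_intros)
qed

lemma dense_Om1: "closure Om1 = UNIV"
proof (rule dense_lines[of "{}"])
  fix a :: complex
  have "{b. (a,b) \<notin> Om1} = {b. b = 0} \<union> {b. 1 + a - 2 * b = 0} \<union> {b. 1 + a + b = 0}"
    unfolding Om1_def by auto
  moreover have "finite {b. 1 + a - 2 * b = 0}" by (rule aff_fin[where c="-2" and d="1+a"]) (simp_all add: algebra_simps)
  moreover have "finite {b. 1 + a + b = 0}" by (rule aff_fin[where c="1" and d="1+a"]) (simp_all add: algebra_simps)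
  ultimately show "finite {b. (a,b) \<notin> Om1}" by simp
qed simp

lemma dense_Om2: "closure Om2 = UNIV"
proof (rule dense_lines[of "{}"])
  fix a :: complex
  have "{b. (a,b) \<notin> Om2} = {b. b = 0} \<union> {b. 2 * b - a - 3 = 0} \<union> {b. 2 * b - a + 3 = 0}"
    unfolding Om2_def by auto
  moreover have "finite {b. 2 * b - a - 3 = 0}" by (rule aff_fin[where c="2" and d="- a - 3"]) (simp_all add: algebra_simps)
  moreover have "finite {b. 2 * b - a + 3 = 0}" by (rule aff_fin[where c="2" and d="3 - a"]) (simp_all add: algebra_simps)
  ultimately show "finite {b. (a,b) \<notin> Om2}" by simp
qed simp

lemma cont_varpi: "continuous_on Om1 varpi"
proof -
  have eq: "varpi = (\<lambda>p. ((fst p ^ 2 - 1 - fst p * snd p - 2 * snd p ^ 2) / snd p,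
                       (1 + fst p - 2 * snd p) * (1 + fst p + snd p) / (2 * snd p)))"
    unfolding varpi_def by (auto simp: fun_eq_iff)
  show ?thesis unfolding eq by (intro continuous_intros) (auto simp: Om1_def)
qed

lemma cont_varpi_inv: "continuous_on Om2 varpi_inv"
proof -
  have eq: "varpi_inv = (\<lambda>p. ((2 * snd p - fst p + 1) / 2 * (8 * snd p / ((2 * snd p - fst p - 3) * (2 * snd p - fst p + 3))) - 1,
         8 * snd p / ((2 * snd p - fst p - 3) * (2 * snd p - fst p + 3))))"
    unfolding varpi_inv_def Let_def by (auto simp: fun_eq_iff)
  show ?thesis unfolding eq by (intro continuous_intros) (auto simp: Om2_def)
qed

lemma hg_transfer:
  assumes "holds_generically Q"
  shows "holds_generically (\<lambda>p. p \<in> Om1 \<and> Q (varpi p))"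
proof -
  obtain U where U: "open U" "closure U = UNIV" "\<forall>w\<in>U. Q w" using assms unfolding holds_generically_def by blast
  define U' where "U' = varpi -` U \<inter> Om1"
  have oU': "open U'" unfolding U'_def using cont_varpi open_Om1 U(1) continuous_on_open_vimage by blast
  have "closure U' = UNIV" unfolding dense_iff_open_meets
  proof (intro allI impI)
    fix T :: "(complex \<times> complex) set" assume T: "open T" "T \<noteq> {}"
    have "T \<inter> Om1 \<noteq> {}" using dense_Om1 T unfolding dense_iff_open_meets by blast
    then obtain p where p: "p \<in> T" "p \<in> Om1" by blast
    define T2 where "T2 = varpi_inv -` (T \<inter> Om1) \<inter> Om2"
    have oT2: "open T2" unfolding T2_def using cont_varpi_inv open_Om2 T(1) open_Om1 continuous_on_open_vimage
      by (meson open_Int)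
    have "varpi p \<in> T2" unfolding T2_def using p varpi_Om2 Om1_varpi by simp
    hence "T2 \<inter> U \<noteq> {}" using U(2) oT2 unfolding dense_iff_open_meets by blast
    then obtain w where w: "w \<in> T2" "w \<in> U" by blast
    have "varpi_inv w \<in> T" "varpi_inv w \<in> Om1" using w unfolding T2_def by auto
    moreover have "varpi (varpi_inv w) = w" using w unfolding T2_def by (simp add: Om2_varpi_inv)
    ultimately have "varpi_inv w \<in> T \<inter> U'" using w unfolding U'_def by simp
    thus "T \<inter> U' \<noteq> {}" by blast
  qed
  thus ?thesis unfolding holds_generically_def using oU' U(3)
    by (intro exI[of _ U']) (auto simp: U'_def)
qed

lemma open_Rset: "open Rset"
proof -
  have eq: "Rset = {p. fst p \<noteq> 1} \<inter> {p. fst p \<noteq> -2} \<inter> {p. fst p \<noteq> -3} \<inter> {p. snd p \<noteq> 0} \<inter>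
      {p. 2 * snd p - fst p - 3 \<noteq> 0} \<inter> {p. 2 * snd p - fst p + 3 \<noteq> 0} \<inter>
      {p. (2 * snd p - fst p) * (fst p - 1) - fst p + 9 \<noteq> 0} \<inter> {p. (2 * snd p - fst p) * (fst p + 2) - fst p \<noteq> 0} \<inter>
      {p. 2 * (fst p - 1) * (fst p + 2) * snd p - (g_map (fst p) + 3) * (fst p + 3) \<noteq> 0} \<inter>
      {p. 2 * (fst p - 1) * (fst p + 2) * snd p - (g_map (fst p) - 3) * (fst p + 3) \<noteq> 0}"
    unfolding Rset_def by auto
  show ?thesis unfolding eq g_map_def by (intro open_Int open_Collect_neq continuous_intros)
qed

lemma dense_Rset: "closure Rset = UNIV"
proof (rule dense_lines[of "{1, -2, -3}"])
  fix a :: complex assume a: "a \<notin> {1, -2, -3}"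
  have a1: "a - 1 \<noteq> 0" "a + 2 \<noteq> 0" "a + 3 \<noteq> 0" using a by (auto simp: add_eq_0_iff2)
  have "{b. (a,b) \<notin> Rset} \<subseteq> {b. b = 0} \<union> {b. 2 * b - a - 3 = 0} \<union> {b. 2 * b - a + 3 = 0}
     \<union> {b. (2 * b - a) * (a - 1) - a + 9 = 0} \<union> {b. (2 * b - a) * (a + 2) - a = 0}
     \<union> {b. 2 * (a - 1) * (a + 2) * b - (g_map a + 3) * (a + 3) = 0}
     \<union> {b. 2 * (a - 1) * (a + 2) * b - (g_map a - 3) * (a + 3) = 0}"
    using a unfolding Rset_def by auto
  moreover have "finite {b. 2 * b - a - 3 = 0}" by (rule aff_fin[where c="2" and d="- a - 3"]) (simp_all add: algebra_simps)
  moreover have "finite {b. 2 * b - a + 3 = 0}" by (rule aff_fin[where c="2" and d="3 - a"]) (simp_all add: algebra_simps)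
  moreover have "finite {b. (2 * b - a) * (a - 1) - a + 9 = 0}"
    proof (rule aff_fin[where c="2 * (a - 1)" and d="- a * (a - 1) - a + 9"])
    show "2 * (a - 1) \<noteq> 0" using a1 by (metis mult_eq_0_iff zero_neq_numeral)
  qed (simp add: algebra_simps)
  moreover have "finite {b. (2 * b - a) * (a + 2) - a = 0}"
    proof (rule aff_fin[where c="2 * (a + 2)" and d="- a * (a + 2) - a"])
    show "2 * (a + 2) \<noteq> 0" using a1 by (metis mult_eq_0_iff zero_neq_numeral)
  qed (simp add: algebra_simps)
  moreover have "finite {b. 2 * (a - 1) * (a + 2) * b - (g_map a + 3) * (a + 3) = 0}"
    proof (rule aff_fin[where c="2 * (a - 1) * (a + 2)" and d="- (g_map a + 3) * (a + 3)"])
    show "2 * (a - 1) * (a + 2) \<noteq> 0" using a1 by (metis mult_eq_0_iff zero_neq_numeral)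
  qed (simp add: algebra_simps)
  moreover have "finite {b. 2 * (a - 1) * (a + 2) * b - (g_map a - 3) * (a + 3) = 0}"
    proof (rule aff_fin[where c="2 * (a - 1) * (a + 2)" and d="- (g_map a - 3) * (a + 3)"])
    show "2 * (a - 1) * (a + 2) \<noteq> 0" using a1 by (metis mult_eq_0_iff zero_neq_numeral)
  qed (simp add: algebra_simps)
  ultimately show "finite {b. (a,b) \<notin> Rset}" by (simp add: finite_subset)
qed simp

definition Kc :: "complex \<Rightarrow> complex \<Rightarrow> complex" where
  "Kc U V = (3 - U - 6 * V)\<^sup>2 - (3 - U - 6 * V) * (2 * V - U + 3) - (3 + U) * (2 * V - U + 3)\<^sup>2"

definition W5 :: "(complex \<times> complex) set" where
  "W5 = {(U,V). U \<noteq> 3 \<and> U \<noteq> 9 \<and> U \<noteq> -3 \<and> 4 * U + 13 \<noteq> 0 \<and> V \<noteq> 0 \<and> 2 * V - U - 3 \<noteq> 0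
      \<and> 2 * V - U + 3 \<noteq> 0 \<and> g_map ((2 * V - U - 1) / 2) - U \<noteq> 0 \<and> Kc U V \<noteq> 0}"

lemma psi_varpi: "psi p = fst (varpi p)"
  by (cases p) (simp add: psi_def varpi_def)

lemma roots_g:
  assumes "4 * U + 13 \<noteq> 0"
  shows "\<exists>r1 r2. r1 \<noteq> r2 \<and> {r. g_map r = U} = {r1, r2}"
proof -
  define c where "c = csqrt (4 * U + 13)"
  have c2: "c\<^sup>2 = 4 * U + 13" unfolding c_def by simp
  have c0: "c \<noteq> 0" using assms unfolding c_def by simp
  define r1 where "r1 = (1 + c) / 2"
  define r2 where "r2 = (1 - c) / 2"
  have fac: "g_map r - U = (r - r1) * (r - r2)" for r
  proof -
    have "4 * (g_map r - U) = 4 * ((r - r1) * (r - r2))"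
      unfolding g_map_def r1_def r2_def using c2 by (simp add: field_simps) algebra
    thus ?thesis by (metis mult_cancel_left zero_neq_numeral)
  qed
  have "{r. g_map r = U} = {r1, r2}"
  proof (rule set_eqI)
    fix r
    have "g_map r = U \<longleftrightarrow> (r - r1) * (r - r2) = 0" using fac[of r] by (metis eq_iff_diff_eq_0)
    thus "r \<in> {r. g_map r = U} \<longleftrightarrow> r \<in> {r1, r2}" by simp
  qed
  moreover have "r1 \<noteq> r2" using c0 unfolding r1_def r2_def by (simp add: field_simps)
  ultimately show ?thesis by blast
qed

lemma line1: assumes "y \<noteq> 0" "1 + x - 2 * y = 0" shows "fst (varpi (x,y)) = -3"
proof -
  have x: "x = 2 * y - 1" using assms(2) by (simp add: algebra_simps eq_neg_iff_add_eq_0)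
  have "x\<^sup>2 - 1 - x * y - 2 * y\<^sup>2 = -3 * y" unfolding x by (simp add: algebra_simps power2_eq_square)
  thus ?thesis using assms(1) by (simp add: varpi_def)
qed

lemma line2: assumes "y \<noteq> 0" "1 + x + y = 0" shows "fst (varpi (x,y)) = 3"
proof -
  have x: "x = - 1 - y" using assms(2) by (simp add: algebra_simps eq_neg_iff_add_eq_0)
  have "x\<^sup>2 - 1 - x * y - 2 * y\<^sup>2 = 3 * y" unfolding x by (simp add: algebra_simps power2_eq_square)
  thus ?thesis using assms(1) by (simp add: varpi_def)
qed

lemma alg_e3: fixes r v V U :: complex
  assumes "v * ((r - 1) * (r + 2)) = V * (r + 3)" "r\<^sup>2 - r - 3 = U"
  shows "(r + 2) * ((2 * v - r) * (r - 1) - r + 9) = (r + 3) * (2 * V - U + 3)"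
  using assms by algebra

lemma alg_e4: fixes r v V U :: complex
  assumes "v * ((r - 1) * (r + 2)) = V * (r + 3)" "r\<^sup>2 - r - 3 = U"
  shows "(r - 1) * ((2 * v - r) * (r + 2) - r) = (r + 3) * (2 * V - U - 3)"
  using assms by algebra

lemma alg_e5: fixes r v V U :: complex
  assumes "v * ((r - 1) * (r + 2)) = V * (r + 3)" "r\<^sup>2 - r - 3 = U"
  shows "2 * (r - 1) * (r + 2) * v - (U + 3) * (r + 3) = (r + 3) * (2 * V - U - 3)"
    "2 * (r - 1) * (r + 2) * v - (U - 3) * (r + 3) = (r + 3) * (2 * V - U + 3)"
  using assms by algebra+

lemma alg_s1: fixes r v V U :: complex
  assumes "v * ((r - 1) * (r + 2)) = V * (r + 3)" "r\<^sup>2 - r - 3 = U" "2 * v - r - 3 = 0"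
  shows "(r + 3) * (2 * r - (2 * V - U - 1)) = 0"
  using assms by algebra

lemma alg_s2: fixes r v V U :: complex
  assumes "v * ((r - 1) * (r + 2)) = V * (r + 3)" "r\<^sup>2 - r - 3 = U" "2 * v - r + 3 = 0"
  shows "r * (2 * V - U + 3) = 3 - U - 6 * V"
  using assms by algebra

lemma alg_K: fixes r V U :: complex
  assumes "r * (2 * V - U + 3) = 3 - U - 6 * V" "r\<^sup>2 - r - 3 = U"
  shows "Kc U V = 0"
proof -
  have "Kc U V = (2 * V - U + 3)\<^sup>2 * (r\<^sup>2 - r - 3 - U)"
    unfolding Kc_def using assms(1) by algebra
  thus ?thesis using assms(2) by simp
qed

lemma root_R:
  assumes W: "(U,V) \<in> W5" and hr: "g_map r = U"
  shows "(r, V / ((r - 1) * (r + 2) / (r + 3))) \<in> Rset" and "r \<noteq> 1" "r \<noteq> -2" "r \<noteq> -3"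
proof -
  have W': "U \<noteq> 3" "U \<noteq> 9" "U \<noteq> -3" "V \<noteq> 0" "2 * V - U - 3 \<noteq> 0" "2 * V - U + 3 \<noteq> 0"
    "g_map ((2 * V - U - 1) / 2) - U \<noteq> 0" "Kc U V \<noteq> 0" using W unfolding W5_def by auto
  show r1: "r \<noteq> 1" using hr W'(3) by (auto simp: g_map_def)
  show r2: "r \<noteq> -2" using hr W'(1) by (auto simp: g_map_def)
  show r3: "r \<noteq> -3" using hr W'(2) by (auto simp: g_map_def)
  have r1': "r - 1 \<noteq> 0" "r + 2 \<noteq> 0" "r + 3 \<noteq> 0" using r1 r2 r3 by (auto simp: add_eq_0_iff2)
  define v where "v = V / ((r - 1) * (r + 2) / (r + 3))"
  have hv: "v * ((r - 1) * (r + 2)) = V * (r + 3)" unfolding v_def using r1' by simp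
  have hr': "r\<^sup>2 - r - 3 = U" using hr unfolding g_map_def by simp
  have v0: "v \<noteq> 0" using W'(4) r1' unfolding v_def by simp
  have s1: "2 * v - r - 3 \<noteq> 0"
  proof
    assume h: "2 * v - r - 3 = 0"
    have "(r + 3) * (2 * r - (2 * V - U - 1)) = 0" using alg_s1[OF hv hr' h] .
    hence "2 * r - (2 * V - U - 1) = 0" using r1'(3) by (metis mult_eq_0_iff)
    hence "2 * r = 2 * V - U - 1" by (simp only: right_minus_eq)
    hence "r = (2 * V - U - 1) / 2" by (simp add: field_simps)
    thus False using hr W'(7) by (metis diff_self)
  qed
  have s2: "2 * v - r + 3 \<noteq> 0"
  proof
    assume h: "2 * v - r + 3 = 0"
    have "Kc U V = 0" using alg_K[OF alg_s2[OF hv hr' h] hr'] .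
    thus False using W'(8) by simp
  qed
  have s3: "(2 * v - r) * (r - 1) - r + 9 \<noteq> 0" using alg_e3[OF hv hr'] r1' W'(6) by (metis mult_eq_0_iff mult_zero_right)
  have s4: "(2 * v - r) * (r + 2) - r \<noteq> 0" using alg_e4[OF hv hr'] r1' W'(5) by (metis mult_eq_0_iff mult_zero_right)
  have s5: "2 * (r - 1) * (r + 2) * v - (g_map r + 3) * (r + 3) \<noteq> 0"
    unfolding hr alg_e5(1)[OF hv hr'] using r1' W'(5) by simp
  have s6: "2 * (r - 1) * (r + 2) * v - (g_map r - 3) * (r + 3) \<noteq> 0"
    unfolding hr alg_e5(2)[OF hv hr'] using r1' W'(6) by simp
  have "(r, v) \<in> Rset"
    unfolding Rset_def using r1 r2 r3 v0 s1 s2 s3 s4 s5 s6 by (simp only: mem_Collect_eq prod.case) blast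
  thus "(r, V / ((r - 1) * (r + 2) / (r + 3))) \<in> Rset" unfolding v_def .
qed

lemma card_pre:
  assumes pO: "p \<in> Om1" and pW: "varpi p \<in> W5"
  shows "card {q \<in> F_dom. F_map q = p} = 2"
proof -
  obtain U V where w: "varpi p = (U,V)" by fastforce
  have W: "(U,V) \<in> W5" using pW w by simp
  have W': "U \<noteq> 3" "U \<noteq> 9" "U \<noteq> -3" "4 * U + 13 \<noteq> 0" "V \<noteq> 0"
    using W unfolding W5_def by auto
  define aa where "aa r = (r - 1) * (r + 2) / (r + 3)" for r :: complex
  define h where "h r = varpi_inv (r, V / aa r)" for r
  obtain r1 r2 where rr: "r1 \<noteq> r2" "{r. g_map r = U} = {r1, r2}" using roots_g[OF W'(4)] by blast
  have pinv: "varpi_inv (U,V) = p" using Om1_varpi[OF pO] w by simp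
  have good: "h r \<in> F_dom \<and> F_map (h r) = p \<and> fst (varpi (h r)) = r" if hr: "g_map r = U" for r
  proof -
    have R: "(r, V / aa r) \<in> Rset" using root_R(1)[OF W hr] unfolding aa_def .
    have n: "r \<noteq> 1" "r \<noteq> -2" "r \<noteq> -3" using root_R(2-4)[OF W hr] by auto
    have an: "aa r \<noteq> 0" using n unfolding aa_def by (auto simp: add_eq_0_iff2)
    have G: "G_map (r, V / aa r) = (U, V)" using hr an unfolding G_map_def aa_def[symmetric] g_map_def by simp
    have "r \<noteq> 1 \<and> r \<noteq> -2 \<and> r \<noteq> -3 \<and> V / aa r \<noteq> 0 \<and> 2 * (V / aa r) - r - 3 \<noteq> 0 \<and> 2 * (V / aa r) - r + 3 \<noteq> 0"
      using R unfolding Rset_def by auto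
    hence "(r, V / aa r) \<in> Om2" unfolding Om2_def by simp
    hence "fst (varpi (h r)) = r" unfolding h_def using Om2_varpi_inv by simp
    thus ?thesis using F_step[OF R] G pinv unfolding h_def by simp
  qed
  have set_eq: "{q \<in> F_dom. F_map q = p} = h ` {r1, r2}"
  proof (rule set_eqI, rule iffI)
    fix q assume "q \<in> h ` {r1, r2}"
    then obtain r where "r \<in> {r1,r2}" "q = h r" by blast
    hence "g_map r = U" "q = h r" using rr by auto
    thus "q \<in> {q \<in> F_dom. F_map q = p}" using good by auto
  next
    fix q assume q: "q \<in> {q \<in> F_dom. F_map q = p}"
    obtain x y where qxy: "q = (x,y)" by fastforce
    have dom: "(x - 1 - y) * (x\<^sup>2 - 1 + y - y\<^sup>2) \<noteq> 0" using q qxy unfolding F_dom_def by auto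
    have d1: "x - 1 - y \<noteq> 0" and d2: "x\<^sup>2 - 1 + y - y\<^sup>2 \<noteq> 0" using dom by auto
    have Fq: "F_map (x,y) = p" using q qxy by simp
    have "snd p \<noteq> 0" using pO unfolding Om1_def by auto
    hence "y\<^sup>2 * (x - 1 + y) / ((x - 1 - y) * (x\<^sup>2 - 1 + y - y\<^sup>2)) \<noteq> 0" using Fq unfolding F_map_def by auto
    hence y0: "y \<noteq> 0" and e0: "x - 1 + y \<noteq> 0" by auto
    define u where "u = fst (varpi (x,y))"
    have gu: "g_map u = U" using F_conj_fst[OF y0 d1 d2 e0] Fq w unfolding u_def by simp
    have u3: "u \<noteq> -3" using gu W'(2) by (auto simp: g_map_def)
    have u1: "u \<noteq> 1" using gu W'(3) by (auto simp: g_map_def)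
    have u2: "u \<noteq> -2" using gu W'(1) by (auto simp: g_map_def)
    have a1: "1 + x - 2 * y \<noteq> 0" using line1[OF y0] u3 unfolding u_def by auto
    have a2: "1 + x + y \<noteq> 0" using line2[OF y0] gu W'(1) unfolding u_def by (auto simp: g_map_def)
    have qO: "(x,y) \<in> Om1" using y0 a1 a2 unfolding Om1_def by simp
    define v where "v = snd (varpi (x,y))"
    have vxy: "varpi (x,y) = (u,v)" unfolding u_def v_def by simp
    have u3': "fst (varpi (x,y)) + 3 \<noteq> 0" using u3 unfolding u_def by (simp add: add_eq_0_iff2)
    have "V = snd (G_map (u,v))" using F_conj_snd[OF y0 d1 d2 e0 u3'] Fq w vxy by simp
    hence Vv: "V = aa u * v" unfolding G_map_def aa_def by simp
    have an: "aa u \<noteq> 0" using u1 u2 u3 unfolding aa_def by (auto simp: add_eq_0_iff2)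
    have "v = V / aa u" using Vv an by simp
    hence "q = h u" using Om1_varpi[OF qO] vxy qxy unfolding h_def by simp
    moreover have "u \<in> {r1, r2}" using gu rr by auto
    ultimately show "q \<in> h ` {r1, r2}" by blast
  qed
  have "inj_on h {r1, r2}"
  proof (rule inj_onI)
    fix a b assume "a \<in> {r1,r2}" "b \<in> {r1,r2}" "h a = h b"
    thus "a = b" using good rr by (metis mem_Collect_eq)
  qed
  hence "card (h ` {r1, r2}) = 2" using rr(1) by (simp add: card_image)
  thus ?thesis using set_eq by simp
qed

lemma open_W5: "open W5"
proof -
  have eq: "W5 = {p. fst p \<noteq> 3} \<inter> {p. fst p \<noteq> 9} \<inter> {p. fst p \<noteq> -3} \<inter> {p. 4 * fst p + 13 \<noteq> 0} \<inter>
     {p. snd p \<noteq> 0} \<inter> {p. 2 * snd p - fst p - 3 \<noteq> 0} \<inter> {p. 2 * snd p - fst p + 3 \<noteq> 0} \<inter>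
     {p. g_map ((2 * snd p - fst p - 1) / 2) - fst p \<noteq> 0} \<inter> {p. Kc (fst p) (snd p) \<noteq> 0}"
    unfolding W5_def by auto
  show ?thesis unfolding eq g_map_def Kc_def by (intro open_Int open_Collect_neq continuous_intros) auto
qed

lemma dense_W5: "closure W5 = UNIV"
proof (rule dense_lines[of "{3, 9, -3, -13/4}"])
  fix a :: complex assume a: "a \<notin> {3, 9, -3, -13/4}"
  have a9: "36 - 4 * a \<noteq> 0" using a by auto
  have a13: "4 * a + 13 \<noteq> 0"
  proof
    assume "4 * a + 13 = 0" hence "a = -13/4" by (simp add: field_simps add_eq_0_iff2 minus_equation_iff)
    thus False using a by simp
  qed
  have "{b. (a,b) \<notin> W5} \<subseteq> {b. b = 0} \<union> {b. 2 * b - a - 3 = 0} \<union> {b. 2 * b - a + 3 = 0}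
     \<union> {b. g_map ((2 * b - a - 1) / 2) - a = 0} \<union> {b. Kc a b = 0}"
    using a a13 unfolding W5_def by auto
  moreover have "finite {b. 2 * b - a - 3 = 0}" by (rule aff_fin[where c="2" and d="- a - 3"]) (simp_all add: algebra_simps)
  moreover have "finite {b. 2 * b - a + 3 = 0}" by (rule aff_fin[where c="2" and d="3 - a"]) (simp_all add: algebra_simps)
  moreover have "finite {b. g_map ((2 * b - a - 1) / 2) - a = 0}"
    by (rule quad_fin[where c = 1 and b = "- (a + 2)" and d = "(a+1)^2/4 + (a+1)/2 - 3 - a"])
       (simp_all add: g_map_def field_simps power2_eq_square)
  moreover have "finite {b. Kc a b = 0}"
  proof (rule quad_fin[where c = "36 - 4 * a" and b = "- (20 + 4 * a) * (3 - a)" and d = "- (3 + a) * (3 - a)^2"])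
    show "36 - 4 * a \<noteq> 0" by fact
  qed (simp add: Kc_def power2_eq_square algebra_simps)
  ultimately show "finite {b. (a,b) \<notin> W5}" by (simp add: finite_subset)
qed simp

definition rdeg :: "nat \<Rightarrow> nat \<Rightarrow> (complex \<times> complex \<Rightarrow> complex) \<Rightarrow> bool" where
  "rdeg a b f \<longleftrightarrow> (\<exists>P::complex poly poly. degree P \<le> b \<and> (\<forall>i. degree (coeff P i) \<le> a)
      \<and> (\<forall>x y. f (x,y) = poly (poly P [:y:]) x))"

lemma rdeg_const: "rdeg a b (\<lambda>_. c)"
  unfolding rdeg_def by (rule exI[of _ "[:[:c:]:]"]) (auto simp: coeff_pCons split: nat.splits)

lemma rdeg_x: "rdeg 1 0 fst"
  unfolding rdeg_def by (rule exI[of _ "[:[:0,1:]:]"]) (auto simp: coeff_pCons split: nat.splits)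

lemma rdeg_y: "rdeg 0 1 snd"
  unfolding rdeg_def by (rule exI[of _ "[:0, 1:]"]) (auto simp: coeff_pCons split: nat.splits)

lemma rdeg_mono: "rdeg a b f \<Longrightarrow> a \<le> a' \<Longrightarrow> b \<le> b' \<Longrightarrow> rdeg a' b' f"
  unfolding rdeg_def by (meson order_trans)

lemma rdeg_add: assumes "rdeg a b f" "rdeg a b g" shows "rdeg a b (\<lambda>p. f p + g p)"
proof -
  obtain P where P: "degree P \<le> b" "\<forall>i. degree (coeff P i) \<le> a" "\<forall>x y. f (x,y) = poly (poly P [:y:]) x"
    using assms(1) unfolding rdeg_def by blast
  obtain Q where Q: "degree Q \<le> b" "\<forall>i. degree (coeff Q i) \<le> a" "\<forall>x y. g (x,y) = poly (poly Q [:y:]) x"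
    using assms(2) unfolding rdeg_def by blast
  show ?thesis unfolding rdeg_def
    by (rule exI[of _ "P + Q"]) (use P Q in \<open>auto intro: degree_add_le\<close>)
qed

lemma rdeg_uminus: assumes "rdeg a b f" shows "rdeg a b (\<lambda>p. - f p)"
proof -
  obtain P where P: "degree P \<le> b" "\<forall>i. degree (coeff P i) \<le> a" "\<forall>x y. f (x,y) = poly (poly P [:y:]) x"
    using assms(1) unfolding rdeg_def by blast
  show ?thesis unfolding rdeg_def
    by (rule exI[of _ "- P"]) (use P in auto)
qed

lemma rdeg_diff: assumes "rdeg a b f" "rdeg a b g" shows "rdeg a b (\<lambda>p. f p - g p)"
  using rdeg_add[OF assms(1) rdeg_uminus[OF assms(2)]] by simp

lemma degree_coeff_mult:
  fixes P Q :: "complex poly poly"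
  assumes "\<forall>i. degree (coeff P i) \<le> a1" "\<forall>i. degree (coeff Q i) \<le> a2"
  shows "degree (coeff (P * Q) n) \<le> a1 + a2"
  unfolding coeff_mult
  by (rule degree_sum_le) (auto intro: order_trans[OF degree_mult_le] add_mono assms[rule_format])

lemma rdeg_mult: assumes "rdeg a1 b1 f" "rdeg a2 b2 g" shows "rdeg (a1 + a2) (b1 + b2) (\<lambda>p. f p * g p)"
proof -
  obtain P where P: "degree P \<le> b1" "\<forall>i. degree (coeff P i) \<le> a1" "\<forall>x y. f (x,y) = poly (poly P [:y:]) x"
    using assms(1) unfolding rdeg_def by blast
  obtain Q where Q: "degree Q \<le> b2" "\<forall>i. degree (coeff Q i) \<le> a2" "\<forall>x y. g (x,y) = poly (poly Q [:y:]) x"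
    using assms(2) unfolding rdeg_def by blast
  show ?thesis unfolding rdeg_def
  proof (rule exI[of _ "P * Q"], intro conjI allI)
    show "degree (P * Q) \<le> b1 + b2" using P(1) Q(1) by (meson add_mono degree_mult_le order_trans)
    show "degree (coeff (P * Q) i) \<le> a1 + a2" for i using degree_coeff_mult P(2) Q(2) by blast
    show "f (x, y) * g (x, y) = poly (poly (P * Q) [:y:]) x" for x y using P(3) Q(3) by simp
  qed
qed

lemma rdeg_pow: assumes "rdeg a b f" shows "rdeg (k * a) (k * b) (\<lambda>p. f p ^ k)"
proof (induction k)
  case 0 show ?case using rdeg_const[of 0 0 1] by simp
next
  case (Suc k)
  have "rdeg (a + k * a) (b + k * b) (\<lambda>p. f p * f p ^ k)" by (rule rdeg_mult[OF assms Suc])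
  thus ?case by simp
qed

lemma rdeg_cong: "rdeg a b f \<Longrightarrow> (\<And>p. f p = g p) \<Longrightarrow> rdeg a b g"
  unfolding rdeg_def by simp

lemma poly_bound_sum:
  fixes p :: "'a::comm_semiring_1 poly"
  assumes "degree p \<le> n"
  shows "poly p x = (\<Sum>i\<le>n. coeff p i * x ^ i)"
proof -
  have "poly p x = (\<Sum>i\<le>degree p. coeff p i * x ^ i)" by (rule poly_altdef)
  also have "\<dots> = (\<Sum>i\<le>n. coeff p i * x ^ i)"
    by (rule sum.mono_neutral_left) (use assms in \<open>auto simp: coeff_eq_0\<close>)
  finally show ?thesis .
qed

lemma poly2_expand:
  fixes P :: "complex poly poly"
  assumes "degree P \<le> b" "\<forall>i. degree (coeff P i) \<le> a"
  shows "poly (poly P [:y:]) x = (\<Sum>j\<le>b. \<Sum>i\<le>a. coeff (coeff P j) i * x ^ i * y ^ j)"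
proof -
  have "poly P [:y:] = (\<Sum>j\<le>b. coeff P j * [:y:] ^ j)" by (rule poly_bound_sum[OF assms(1)])
  hence "poly (poly P [:y:]) x = (\<Sum>j\<le>b. poly (coeff P j) x * y ^ j)"
    by (simp add: poly_sum poly_power)
  also have "\<dots> = (\<Sum>j\<le>b. (\<Sum>i\<le>a. coeff (coeff P j) i * x ^ i) * y ^ j)"
    using poly_bound_sum[OF assms(2)[rule_format]] by simp
  also have "\<dots> = (\<Sum>j\<le>b. \<Sum>i\<le>a. coeff (coeff P j) i * x ^ i * y ^ j)"
    by (simp add: sum_distrib_right)
  finally show ?thesis .
qed

lemma rdeg_hom:
  assumes "rdeg a b f"
  shows "\<exists>c. \<forall>x y. f (x,y) = hom_eval (a + b) c x y 1"
proof -
  obtain P where P: "degree P \<le> b" "\<forall>i. degree (coeff P i) \<le> a" "\<forall>x y. f (x,y) = poly (poly P [:y:]) x"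
    using assms(1) unfolding rdeg_def by blast
  define c where "c = (\<lambda>ij. coeff (coeff P (snd ij)) (fst ij))"
  have "f (x,y) = hom_eval (a + b) c x y 1" for x y
  proof -
    define T where "T = {(i, j). i + j \<le> a + b}"
    define F where "F = (\<lambda>ij. c ij * x ^ fst ij * y ^ snd ij)"
    have fT: "finite T" unfolding T_def
      by (rule finite_subset[of _ "{..a+b} \<times> {..a+b}"]) auto
    have "hom_eval (a + b) c x y 1 = sum F T" unfolding hom_eval_def T_def F_def by simp
    also have "\<dots> = sum F ({..a} \<times> {..b})"
    proof (rule sum.mono_neutral_left[symmetric, OF fT])
      show "{..a} \<times> {..b} \<subseteq> T" unfolding T_def by auto
      show "\<forall>i\<in>T - {..a} \<times> {..b}. F i = 0"
      proof
        fix ij assume "ij \<in> T - {..a} \<times> {..b}"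
        hence "fst ij > a \<or> snd ij > b" by (cases ij) auto
        hence "c ij = 0"
        proof
          assume h: "fst ij > a"
          have "degree (coeff P (snd ij)) < fst ij" using P(2) h le_less_trans by blast
          thus ?thesis unfolding c_def by (rule coeff_eq_0)
        next
          assume h: "snd ij > b"
          have "degree P < snd ij" using P(1) h le_less_trans by blast
          hence "coeff P (snd ij) = 0" by (rule coeff_eq_0)
          thus ?thesis unfolding c_def by simp
        qed
        thus "F ij = 0" unfolding F_def by simp
      qed
    qed
    also have "\<dots> = (\<Sum>i\<le>a. \<Sum>j\<le>b. F (i,j))" by (simp add: sum.cartesian_product)
    also have "\<dots> = (\<Sum>j\<le>b. \<Sum>i\<le>a. F (i,j))" by (rule sum.swap)
    also have "\<dots> = poly (poly P [:y:]) x" unfolding poly2_expand[OF P(1,2)] F_def c_def by simp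
    finally show ?thesis using P(3) by simp
  qed
  thus ?thesis by blast
qed

lemma rdeg_line:
  assumes "rdeg a b f"
  shows "\<exists>q. \<forall>t. f (x0, t) = poly q t"
proof -
  obtain P where P: "\<forall>x y. f (x,y) = poly (poly P [:y:]) x"
    using assms(1) unfolding rdeg_def by blast
  have "poly (poly P [:t:]) x0 = poly (map_poly (\<lambda>q. poly q x0) P) t" for t
    by (induction P) (auto simp: map_poly_pCons algebra_simps)
  thus ?thesis using P by (intro exI[of _ "map_poly (\<lambda>q. poly q x0) P"]) auto
qed

lemma hom_line:
  "\<exists>q. degree q \<le> d \<and> (\<forall>t. hom_eval d c x0 t 1 = poly q t)"
proof -
  define T where "T = {(i, j). i + j \<le> (d::nat)}"
  have fT: "finite T" unfolding T_def
    by (rule finite_subset[of _ "{..d} \<times> {..d}"]) auto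
  define q where "q = (\<Sum>ij\<in>T. monom (c ij * x0 ^ fst ij) (snd ij))"
  have "degree q \<le> d" unfolding q_def
    by (rule degree_sum_le[OF fT]) (auto simp: T_def intro: order_trans[OF degree_monom_le])
  moreover have "hom_eval d c x0 t 1 = poly q t" for t
    unfolding q_def hom_eval_def T_def[symmetric] by (simp add: poly_sum poly_monom mult.assoc)
  ultimately show ?thesis by blast
qed

definition aa :: "complex \<Rightarrow> complex" where "aa u = (u - 1) * (u + 2) / (u + 3)"
definition Aprod :: "nat \<Rightarrow> complex \<Rightarrow> complex" where "Aprod k u = (\<Prod>j<k. aa ((g_map ^^ j) u))"

lemma G_map_eq: "G_map (u,v) = (g_map u, aa u * v)"
  by (simp add: G_map_def g_map_def aa_def)

lemma G_iter: "(G_map ^^ k) (u,v) = ((g_map ^^ k) u, Aprod k u * v)"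
proof (induction k)
  case 0 show ?case by (simp add: Aprod_def)
next
  case (Suc k)
  show ?case using Suc by (simp add: G_map_eq Aprod_def)
qed

fun gp :: "nat \<Rightarrow> complex poly" where
  "gp 0 = [:0, 1:]"
| "gp (Suc j) = pcompose [:-3, -1, 1:] (gp j)"

lemma poly_gp: "poly (gp j) u = (g_map ^^ j) u"
  by (induction j) (simp_all add: poly_pcompose g_map_def algebra_simps power2_eq_square)

lemma degree_gp: "degree (gp j) = 2 ^ j"
  by (induction j) (simp_all add: degree_pcompose)

lemma g_iter_fin: "finite {u. (g_map ^^ j) u = c}"
proof -
  have e: "gp j - [:c:] = gp j + [:-c:]" by simp
  have "degree (gp j - [:c:]) = 2 ^ j" unfolding e using degree_gp[of j]
    by (subst degree_add_eq_left) auto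
  hence "gp j - [:c:] \<noteq> 0" by (metis degree_0 one_le_numeral power_not_zero zero_neq_numeral)
  hence "finite {u. poly (gp j - [:c:]) u = 0}" by (rule poly_roots_finite)
  thus ?thesis by (simp add: poly_gp)
qed

lemma Rset_fin: assumes a: "a \<notin> {1, -2, -3}" shows "finite {b. (a,b) \<notin> Rset}"
proof -
  have a1: "a - 1 \<noteq> 0" "a + 2 \<noteq> 0" "a + 3 \<noteq> 0" using a by (auto simp: add_eq_0_iff2)
  have "{b. (a,b) \<notin> Rset} \<subseteq> {b. b = 0} \<union> {b. 2 * b - a - 3 = 0} \<union> {b. 2 * b - a + 3 = 0}
     \<union> {b. (2 * b - a) * (a - 1) - a + 9 = 0} \<union> {b. (2 * b - a) * (a + 2) - a = 0}
     \<union> {b. 2 * (a - 1) * (a + 2) * b - (g_map a + 3) * (a + 3) = 0}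
     \<union> {b. 2 * (a - 1) * (a + 2) * b - (g_map a - 3) * (a + 3) = 0}"
    using a unfolding Rset_def by auto
  moreover have "finite {b. 2 * b - a - 3 = 0}" by (rule aff_fin[where c="2" and d="- a - 3"]) (simp_all add: algebra_simps)
  moreover have "finite {b. 2 * b - a + 3 = 0}" by (rule aff_fin[where c="2" and d="3 - a"]) (simp_all add: algebra_simps)
  moreover have "finite {b. (2 * b - a) * (a - 1) - a + 9 = 0}"
  proof (rule aff_fin[where c="2 * (a - 1)" and d="- a * (a - 1) - a + 9"])
    show "2 * (a - 1) \<noteq> 0" using a1 by (metis mult_eq_0_iff zero_neq_numeral)
  qed (simp add: algebra_simps)
  moreover have "finite {b. (2 * b - a) * (a + 2) - a = 0}"
  proof (rule aff_fin[where c="2 * (a + 2)" and d="- a * (a + 2) - a"])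
    show "2 * (a + 2) \<noteq> 0" using a1 by (metis mult_eq_0_iff zero_neq_numeral)
  qed (simp add: algebra_simps)
  moreover have "finite {b. 2 * (a - 1) * (a + 2) * b - (g_map a + 3) * (a + 3) = 0}"
  proof (rule aff_fin[where c="2 * (a - 1) * (a + 2)" and d="- (g_map a + 3) * (a + 3)"])
    show "2 * (a - 1) * (a + 2) \<noteq> 0" using a1 by (metis mult_eq_0_iff zero_neq_numeral)
  qed (simp add: algebra_simps)
  moreover have "finite {b. 2 * (a - 1) * (a + 2) * b - (g_map a - 3) * (a + 3) = 0}"
  proof (rule aff_fin[where c="2 * (a - 1) * (a + 2)" and d="- (g_map a - 3) * (a + 3)"])
    show "2 * (a - 1) * (a + 2) \<noteq> 0" using a1 by (metis mult_eq_0_iff zero_neq_numeral)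
  qed (simp add: algebra_simps)
  ultimately show "finite {b. (a,b) \<notin> Rset}" by (simp add: finite_subset)
qed

lemma Om2_fin: "finite {b. (a,b) \<notin> Om2}"
proof -
  have "{b. (a,b) \<notin> Om2} = {b. b = 0} \<union> {b. 2 * b - a - 3 = 0} \<union> {b. 2 * b - a + 3 = 0}"
    unfolding Om2_def by auto
  moreover have "finite {b. 2 * b - a - 3 = 0}" by (rule aff_fin[where c="2" and d="- a - 3"]) (simp_all add: algebra_simps)
  moreover have "finite {b. 2 * b - a + 3 = 0}" by (rule aff_fin[where c="2" and d="3 - a"]) (simp_all add: algebra_simps)
  ultimately show ?thesis by simp
qed

definition Wn :: "nat \<Rightarrow> (complex \<times> complex) set" where
  "Wn n = {w. w \<in> Om2 \<and> (\<forall>k<n. (G_map ^^ k) w \<in> Rset)}"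

lemma Rset_fst: "w \<in> Rset \<Longrightarrow> fst w \<notin> {1, -2, -3}"
  unfolding Rset_def by auto

lemma aa_nz: "u \<notin> {1, -2, -3} \<Longrightarrow> aa u \<noteq> 0"
  unfolding aa_def by (auto simp: add_eq_0_iff2)

lemma dense_Wn: "closure (Wn n) = UNIV"
proof (rule dense_lines[of "\<Union>j<n. {a. (g_map ^^ j) a \<in> {1, -2, -3}}"])
  have "{a. (g_map ^^ j) a \<in> {1, -2, -3}} = {a. (g_map ^^ j) a = 1} \<union> {a. (g_map ^^ j) a = -2} \<union> {a. (g_map ^^ j) a = -3}" for j
    by auto
  thus "finite (\<Union>j<n. {a. (g_map ^^ j) a \<in> {1, -2, -3}})" using g_iter_fin by simp
next
  fix a assume a: "a \<notin> (\<Union>j<n. {a. (g_map ^^ j) a \<in> {1, -2, -3}})"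
  have gj: "\<And>j. j < n \<Longrightarrow> (g_map ^^ j) a \<notin> {1, -2, -3}" using a by blast
  have "{b. (a,b) \<notin> Wn n} \<subseteq> {b. (a,b) \<notin> Om2} \<union> (\<Union>k<n. (\<lambda>b. Aprod k a * b) -` {b. ((g_map ^^ k) a, b) \<notin> Rset})"
    unfolding Wn_def by (auto simp: G_iter)
  moreover have "finite ((\<lambda>b. Aprod k a * b) -` {b. ((g_map ^^ k) a, b) \<notin> Rset})" if k: "k < n" for k
  proof (rule finite_vimageI)
    show "finite {b. ((g_map ^^ k) a, b) \<notin> Rset}" using Rset_fin gj k by blast
    have "Aprod k a \<noteq> 0" unfolding Aprod_def using gj k aa_nz by (simp add: prod_zero_iff)
    thus "inj (\<lambda>b. Aprod k a * b)" by (simp add: inj_def)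
  qed
  ultimately show "finite {b. (a,b) \<notin> Wn n}" using Om2_fin by (simp add: finite_subset)
qed

definition Sn :: "nat \<Rightarrow> (complex \<times> complex) set" where
  "Sn n = {w. \<forall>j<n. (g_map ^^ j) (fst w) \<notin> {1, -2, -3}}"

lemma open_Sn: "open (Sn n)"
proof -
  have eq: "Sn n = (\<Inter>j<n. {w. poly (gp j) (fst w) \<noteq> 1} \<inter> {w. poly (gp j) (fst w) \<noteq> -2} \<inter> {w. poly (gp j) (fst w) \<noteq> -3})"
    unfolding Sn_def poly_gp by auto
  show ?thesis unfolding eq by (intro open_INT finite_lessThan ballI open_Int open_Collect_neq continuous_intros)
qed

lemma cont_Giter: assumes "k \<le> n" shows "continuous_on (Sn n) (G_map ^^ k)"
proof -
  have eq: "G_map ^^ k = (\<lambda>w. (poly (gp k) (fst w), (\<Prod>j<k. (poly (gp j) (fst w) - 1) * (poly (gp j) (fst w) + 2) / (poly (gp j) (fst w) + 3)) * snd w))"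
    by (rule ext, case_tac w) (simp add: G_iter poly_gp Aprod_def aa_def)
  have nz: "\<forall>w\<in>Sn n. poly (gp j) (fst w) + 3 \<noteq> 0" if "j < k" for j
    using that assms unfolding Sn_def poly_gp by (auto simp: add_eq_0_iff2)
  show ?thesis unfolding eq
    by (intro continuous_intros) (use nz in auto)
qed

lemma open_Wn: "open (Wn n)"
proof -
  have eq: "Wn n = Om2 \<inter> Sn n \<inter> (\<Inter>k<n. (G_map ^^ k) -` Rset \<inter> Sn n)"
  proof (rule set_eqI)
    fix w
    have "w \<in> Wn n \<Longrightarrow> w \<in> Sn n"
      unfolding Wn_def Sn_def using Rset_fst by (cases w) (fastforce simp: G_iter)
    thus "w \<in> Wn n \<longleftrightarrow> w \<in> Om2 \<inter> Sn n \<inter> (\<Inter>k<n. (G_map ^^ k) -` Rset \<inter> Sn n)"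
      unfolding Wn_def by auto
  qed
  have "open ((G_map ^^ k) -` Rset \<inter> Sn n)" if "k < n" for k
    using cont_Giter[of k n] that open_Sn open_Rset continuous_on_open_vimage by auto
  thus ?thesis unfolding eq using open_Om2 open_Sn by (intro open_Int open_INT) auto
qed

lemma Wn_Suc: "w \<in> Wn (Suc n) \<Longrightarrow> w \<in> Wn n"
  unfolding Wn_def by auto

lemma iter_F:
  assumes "p \<in> Om1" "varpi p \<in> Wn n"
  shows "(F_map ^^ n) p = varpi_inv ((G_map ^^ n) (varpi p)) \<and> (G_map ^^ n) (varpi p) \<in> Om2"
  using assms(2)
proof (induction n)
  case 0 thus ?case using Om1_varpi[OF assms(1)] unfolding Wn_def by simp
next
  case (Suc n)
  have IH: "(F_map ^^ n) p = varpi_inv ((G_map ^^ n) (varpi p))" using Suc Wn_Suc by blast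
  have R: "(G_map ^^ n) (varpi p) \<in> Rset" using Suc.prems unfolding Wn_def by simp
  obtain u v where uv: "(G_map ^^ n) (varpi p) = (u,v)" by fastforce
  have st: "F_map (varpi_inv (u,v)) = varpi_inv (G_map (u,v)) \<and> G_map (u,v) \<in> Om2"
    using F_step R uv by simp
  show ?case using IH st uv by simp
qed

definition Yp :: "nat \<Rightarrow> complex \<times> complex \<Rightarrow> complex" where "Yp k p = snd p ^ (2 ^ k)"
definition N1f :: "complex \<times> complex \<Rightarrow> complex" where "N1f p = fst p ^ 2 - 1 - fst p * snd p - 2 * snd p ^ 2"
definition N2f :: "complex \<times> complex \<Rightarrow> complex" where "N2f p = (1 + fst p - 2 * snd p) * (1 + fst p + snd p)"

fun Phi :: "nat \<Rightarrow> complex \<times> complex \<Rightarrow> complex" where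
  "Phi 0 p = N1f p"
| "Phi (Suc k) p = Phi k p ^ 2 - Yp k p * Phi k p - 3 * Yp (Suc k) p"

fun An :: "nat \<Rightarrow> complex \<times> complex \<Rightarrow> complex" where
  "An 0 p = 1"
| "An (Suc k) p = An k p * ((Phi k p - Yp k p) * (Phi k p + 2 * Yp k p))"

fun Ad :: "nat \<Rightarrow> complex \<times> complex \<Rightarrow> complex" where
  "Ad 0 p = 1"
| "Ad (Suc k) p = Ad k p * (Yp k p * (Phi k p + 3 * Yp k p))"

lemma Yp_Suc: "Yp (Suc k) p = Yp k p ^ 2"
  unfolding Yp_def by (simp add: power_mult[symmetric] mult.commute)

lemma Yp_nz: "snd p \<noteq> 0 \<Longrightarrow> Yp k p \<noteq> 0"
  unfolding Yp_def by simp

lemma varpi_fst: "fst (varpi p) = N1f p / snd p"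
  by (cases p) (simp add: varpi_def N1f_def)

lemma varpi_snd: "snd (varpi p) = N2f p / (2 * snd p)"
  by (cases p) (simp add: varpi_def N2f_def)

lemma g_Phi: assumes "snd p \<noteq> 0" shows "(g_map ^^ k) (fst (varpi p)) = Phi k p / Yp k p"
proof (induction k)
  case 0 show ?case by (simp add: varpi_fst Yp_def)
next
  case (Suc k)
  have Y: "Yp k p \<noteq> 0" using Yp_nz assms by blast
  have "(g_map ^^ Suc k) (fst (varpi p)) = g_map (Phi k p / Yp k p)" using Suc by simp
  also have "\<dots> = Phi (Suc k) p / Yp (Suc k) p"
    unfolding g_map_def Phi.simps Yp_Suc using Y by (simp add: field_simps power2_eq_square)
  finally show ?case .
qed

lemma aa_frac:
  fixes P Y :: complex
  assumes Y: "Y \<noteq> 0" and P3: "P + 3 * Y \<noteq> 0"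
  shows "aa (P / Y) = ((P - Y) * (P + 2 * Y)) / (Y * (P + 3 * Y))"
proof -
  have h1: "P / Y - 1 = (P - Y) / Y" "P / Y + 2 = (P + 2 * Y) / Y" "P / Y + 3 = (P + 3 * Y) / Y"
    using Y by (simp_all add: field_simps)
  show ?thesis unfolding aa_def h1 times_divide_times_eq divide_divide_times_eq
  proof (subst frac_eq_eq)
    show "Y * Y * (P + 3 * Y) \<noteq> 0" using Y P3 by simp
    show "Y * (P + 3 * Y) \<noteq> 0" using Y P3 by simp
  qed algebra
qed

lemma A_Phi:
  assumes y: "snd p \<noteq> 0" and h: "\<forall>j<k. (g_map ^^ j) (fst (varpi p)) + 3 \<noteq> 0"
  shows "Aprod k (fst (varpi p)) = An k p / Ad k p \<and> Ad k p \<noteq> 0"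
  using h
proof (induction k)
  case 0 show ?case by (simp add: Aprod_def)
next
  case (Suc k)
  have IH: "Aprod k (fst (varpi p)) = An k p / Ad k p" "Ad k p \<noteq> 0" using Suc by auto
  have Y: "Yp k p \<noteq> 0" using Yp_nz y by blast
  have h3: "Phi k p / Yp k p + 3 \<noteq> 0" using Suc.prems g_Phi[OF y, of k] by auto
  hence P3: "Phi k p + 3 * Yp k p \<noteq> 0" using Y by (simp add: field_simps)
  have "aa (Phi k p / Yp k p) = ((Phi k p - Yp k p) * (Phi k p + 2 * Yp k p)) / (Yp k p * (Phi k p + 3 * Yp k p))"
    by (rule aa_frac[OF Y P3])
  hence "Aprod (Suc k) (fst (varpi p)) = (An k p / Ad k p) * (((Phi k p - Yp k p) * (Phi k p + 2 * Yp k p)) / (Yp k p * (Phi k p + 3 * Yp k p)))"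
    using IH g_Phi[OF y, of k] by (simp add: Aprod_def)
  also have "\<dots> = An (Suc k) p / Ad (Suc k) p" by (simp add: times_divide_times_eq)
  finally show ?case using IH Y P3 by simp
qed

lemma vinv_formula:
  fixes Nu Du Nv Dv :: complex
  assumes Dv: "Dv \<noteq> 0" and Du: "Du \<noteq> 0"
    and s1: "2 * (Nv / Dv) - Nu / Du - 3 \<noteq> 0" and s2: "2 * (Nv / Dv) - Nu / Du + 3 \<noteq> 0"
  defines "Ns \<equiv> 2 * Nv * Du - Nu * Dv" and "Ds \<equiv> Dv * Du"
  defines "Den \<equiv> (Ns - 3 * Ds) * (Ns + 3 * Ds)"
  shows "Den \<noteq> 0 \<and> varpi_inv (Nu / Du, Nv / Dv) = ((4 * Nv * Du * (Ns + Ds) - Den) / Den, 8 * Nv * Dv * Du^2 / Den)"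
proof -
  have es: "2 * (Nv / Dv) - Nu / Du = Ns / Ds" unfolding Ns_def Ds_def using Dv Du by (simp add: field_simps)
  have Sd0: "Ds \<noteq> 0" unfolding Ds_def using Dv Du by simp
  have e1: "Ns / Ds - 3 = (Ns - 3 * Ds) / Ds" "Ns / Ds + 3 = (Ns + 3 * Ds) / Ds" using Sd0 by (simp_all add: field_simps)
  have n1: "Ns - 3 * Ds \<noteq> 0" using s1 Sd0 unfolding es e1 by simp
  have n2: "Ns + 3 * Ds \<noteq> 0" using s2 Sd0 unfolding es e1 by simp
  have D0: "Den \<noteq> 0" unfolding Den_def using n1 n2 by simp
  have Y: "8 * (Nv / Dv) / ((2 * (Nv / Dv) - Nu / Du - 3) * (2 * (Nv / Dv) - Nu / Du + 3)) = 8 * Nv * Dv * Du^2 / Den"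
  proof -
    have a: "(2 * (Nv / Dv) - Nu / Du - 3) * (2 * (Nv / Dv) - Nu / Du + 3) = Den / (Ds * Ds)"
      unfolding es e1 Den_def by (simp add: times_divide_times_eq)
    have b: "8 * (Nv / Dv) * (Ds * Ds) = 8 * Nv * Dv * Du^2"
      unfolding Ds_def using Dv by (simp add: field_simps power2_eq_square)
    show ?thesis unfolding a divide_divide_eq_right b ..
  qed
  have X: "(2 * (Nv / Dv) - Nu / Du + 1) / 2 * (8 * Nv * Dv * Du^2 / Den) - 1 = (4 * Nv * Du * (Ns + Ds) - Den) / Den"
  proof -
    have "(2 * (Nv / Dv) - Nu / Du + 1) = (Ns + Ds) / Ds" unfolding es using Sd0 by (simp add: field_simps)
    hence "(2 * (Nv / Dv) - Nu / Du + 1) / 2 * (8 * Nv * Dv * Du^2 / Den) = 4 * Nv * Du * (Ns + Ds) / Den"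
      using Sd0 D0 Dv Du unfolding Ds_def by (simp add: field_simps power2_eq_square)
    thus ?thesis using D0 by (simp add: diff_divide_distrib)
  qed
  show ?thesis unfolding varpi_inv_def Let_def prod.case Y X using D0 by simp
qed

lemma rdeg_mult': "rdeg a1 b1 f \<Longrightarrow> rdeg a2 b2 g \<Longrightarrow> a1 + a2 \<le> a \<Longrightarrow> b1 + b2 \<le> b \<Longrightarrow> rdeg a b (\<lambda>p. f p * g p)"
  using rdeg_mult rdeg_mono by blast

lemma rdeg_add': "rdeg a1 b1 f \<Longrightarrow> rdeg a2 b2 g \<Longrightarrow> a1 \<le> a \<Longrightarrow> a2 \<le> a \<Longrightarrow> b1 \<le> b \<Longrightarrow> b2 \<le> b \<Longrightarrow> rdeg a b (\<lambda>p. f p + g p)"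
  using rdeg_add rdeg_mono by blast

lemma rdeg_diff': "rdeg a1 b1 f \<Longrightarrow> rdeg a2 b2 g \<Longrightarrow> a1 \<le> a \<Longrightarrow> a2 \<le> a \<Longrightarrow> b1 \<le> b \<Longrightarrow> b2 \<le> b \<Longrightarrow> rdeg a b (\<lambda>p. f p - g p)"
  using rdeg_diff rdeg_mono by blast

lemma rdeg_cmult: "rdeg a b f \<Longrightarrow> rdeg a b (\<lambda>p. c * f p)"
  using rdeg_mult[OF rdeg_const[of 0 0 c]] by simp

lemma rdeg_Yp: "rdeg 0 (2 ^ k) (Yp k)"
  using rdeg_pow[OF rdeg_y, of "2 ^ k"] unfolding Yp_def by simp

lemma rdeg_N1: "rdeg 2 2 N1f"
proof -
  have a: "rdeg 2 0 (\<lambda>p. fst p ^ 2)" using rdeg_pow[OF rdeg_x, of 2] by simp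
  have b: "rdeg 0 2 (\<lambda>p. 2 * snd p ^ 2)" using rdeg_cmult[OF rdeg_pow[OF rdeg_y, of 2]] by simp
  have c: "rdeg 1 1 (\<lambda>p. fst p * snd p)" using rdeg_mult[OF rdeg_x rdeg_y] by simp
  have d: "rdeg 2 2 (\<lambda>p. fst p ^ 2 - 1)" by (rule rdeg_diff'[OF a rdeg_const[of 0 0 1]]) auto
  have e: "rdeg 2 2 (\<lambda>p. fst p ^ 2 - 1 - fst p * snd p)" by (rule rdeg_diff'[OF d c]) auto
  have f: "rdeg 2 2 (\<lambda>p. fst p ^ 2 - 1 - fst p * snd p - 2 * snd p ^ 2)" by (rule rdeg_diff'[OF e b]) auto
  show ?thesis using f unfolding N1f_def[abs_def] .
qed

lemma rdeg_N2: "rdeg 2 2 N2f"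
proof -
  have a: "rdeg 1 1 (\<lambda>p. 1 + fst p - 2 * snd p)"
    by (rule rdeg_diff'[OF rdeg_add'[OF rdeg_const[of 0 0 1] rdeg_x] rdeg_cmult[OF rdeg_y]]) auto
  have b: "rdeg 1 1 (\<lambda>p. 1 + fst p + snd p)"
    by (rule rdeg_add'[OF rdeg_add'[OF rdeg_const[of 0 0 1] rdeg_x] rdeg_y]) auto
  show ?thesis using rdeg_mult[OF a b] unfolding N2f_def[abs_def] one_add_one .
qed

lemma rdeg_Phi: "rdeg (2 ^ (k + 1)) (2 ^ (k + 1)) (Phi k)"
proof (induction k)
  case 0 show ?case using rdeg_N1 by (simp add: rdeg_def)
next
  case (Suc k)
  have a: "rdeg (2 ^ (k + 2)) (2 ^ (k + 2)) (\<lambda>p. Phi k p ^ 2)"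
    using rdeg_pow[OF Suc, of 2] by (simp add: mult.commute)
  have b: "rdeg (2 ^ (k + 2)) (2 ^ (k + 2)) (\<lambda>p. Yp k p * Phi k p)"
    by (rule rdeg_mult'[OF rdeg_Yp Suc]) auto
  have c: "rdeg (2 ^ (k + 2)) (2 ^ (k + 2)) (\<lambda>p. 3 * Yp (Suc k) p)"
    by (rule rdeg_mono[OF rdeg_cmult[OF rdeg_Yp]]) auto
  have "rdeg (2 ^ (k + 2)) (2 ^ (k + 2)) (\<lambda>p. Phi k p ^ 2 - Yp k p * Phi k p - 3 * Yp (Suc k) p)"
    by (rule rdeg_diff'[OF rdeg_diff'[OF a b] c]) auto
  thus ?case by (simp add: rdeg_def)
qed

lemma rdeg_An: "rdeg (2 ^ (k + 2)) (2 ^ (k + 2)) (An k)"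
proof (induction k)
  case 0 show ?case using rdeg_const[of 4 4 1] by (simp add: rdeg_def)
next
  case (Suc k)
  have a: "rdeg (2 ^ (k + 1)) (2 ^ (k + 1)) (\<lambda>p. Phi k p - Yp k p)"
    by (rule rdeg_diff'[OF rdeg_Phi rdeg_Yp]) auto
  have b: "rdeg (2 ^ (k + 1)) (2 ^ (k + 1)) (\<lambda>p. Phi k p + 2 * Yp k p)"
    by (rule rdeg_add'[OF rdeg_Phi rdeg_cmult[OF rdeg_Yp]]) auto
  have c: "rdeg (2 ^ (k + 2)) (2 ^ (k + 2)) (\<lambda>p. (Phi k p - Yp k p) * (Phi k p + 2 * Yp k p))"
    by (rule rdeg_mult'[OF a b]) auto
  have "rdeg (2 ^ (Suc k + 2)) (2 ^ (Suc k + 2)) (\<lambda>p. An k p * ((Phi k p - Yp k p) * (Phi k p + 2 * Yp k p)))"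
    by (rule rdeg_mult'[OF Suc c]) auto
  thus ?case by (simp add: rdeg_def)
qed

lemma rdeg_Ad: "rdeg (2 ^ (k + 2)) (2 ^ (k + 2)) (Ad k)"
proof (induction k)
  case 0 show ?case using rdeg_const[of 4 4 1] by (simp add: rdeg_def)
next
  case (Suc k)
  have b: "rdeg (2 ^ (k + 1)) (2 ^ (k + 1)) (\<lambda>p. Phi k p + 3 * Yp k p)"
    by (rule rdeg_add'[OF rdeg_Phi rdeg_cmult[OF rdeg_Yp]]) auto
  have c: "rdeg (2 ^ (k + 2)) (2 ^ (k + 2)) (\<lambda>p. Yp k p * (Phi k p + 3 * Yp k p))"
    by (rule rdeg_mult'[OF rdeg_Yp b]) auto
  have "rdeg (2 ^ (Suc k + 2)) (2 ^ (Suc k + 2)) (\<lambda>p. Ad k p * (Yp k p * (Phi k p + 3 * Yp k p)))"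
    by (rule rdeg_mult'[OF Suc c]) auto
  thus ?case by (simp add: rdeg_def)
qed

definition NvF :: "nat \<Rightarrow> complex \<times> complex \<Rightarrow> complex" where "NvF n p = An n p * N2f p"
definition DvF :: "nat \<Rightarrow> complex \<times> complex \<Rightarrow> complex" where "DvF n p = 2 * snd p * Ad n p"
definition NsF :: "nat \<Rightarrow> complex \<times> complex \<Rightarrow> complex" where "NsF n p = 2 * NvF n p * Yp n p - Phi n p * DvF n p"
definition DsF :: "nat \<Rightarrow> complex \<times> complex \<Rightarrow> complex" where "DsF n p = DvF n p * Yp n p"
definition DenF :: "nat \<Rightarrow> complex \<times> complex \<Rightarrow> complex" where "DenF n p = (NsF n p - 3 * DsF n p) * (NsF n p + 3 * DsF n p)"
definition XnF :: "nat \<Rightarrow> complex \<times> complex \<Rightarrow> complex" where "XnF n p = 4 * NvF n p * Yp n p * (NsF n p + DsF n p) - DenF n p"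
definition YnF :: "nat \<Rightarrow> complex \<times> complex \<Rightarrow> complex" where "YnF n p = 8 * NvF n p * DvF n p * Yp n p ^ 2"

lemma rdeg_final:
  fixes n :: nat
  defines "B \<equiv> (2::nat) ^ (n + 3)"
  shows "rdeg (4 * B) (4 * B) (DenF n)" "rdeg (4 * B) (4 * B) (XnF n)" "rdeg (4 * B) (4 * B) (YnF n)"
proof -
  have p1: "(2::nat) ^ (n + 2) + 2 \<le> B" "(2::nat) ^ (n + 2) + 1 \<le> B" "(2::nat) ^ (n + 1) \<le> B" "(2::nat) ^ n \<le> B"
    "(2::nat) ^ (n + 2) \<le> B"
  proof -
    have m: "(1::nat) \<le> 2 ^ n" by simp
    have e: "(2::nat) ^ (n + 3) = 8 * 2 ^ n" "(2::nat) ^ (n + 2) = 4 * 2 ^ n" "(2::nat) ^ (n + 1) = 2 * 2 ^ n"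
      by (simp_all add: power_add)
    show "(2::nat) ^ (n + 2) + 2 \<le> B" "(2::nat) ^ (n + 2) + 1 \<le> B" "(2::nat) ^ (n + 1) \<le> B" "(2::nat) ^ n \<le> B"
      "(2::nat) ^ (n + 2) \<le> B" unfolding B_def e using m by linarith+
  qed
  have Nv: "rdeg B B (NvF n)"
    unfolding NvF_def[abs_def] by (rule rdeg_mult'[OF rdeg_An rdeg_N2]) (use p1 in auto)
  have Dv: "rdeg B B (DvF n)"
  proof -
    have "rdeg 0 1 (\<lambda>p. 2 * snd p)" by (rule rdeg_cmult[OF rdeg_y])
    thus ?thesis unfolding DvF_def[abs_def] by (rule rdeg_mult'[OF _ rdeg_Ad]) (use p1 in auto)
  qed
  have Nu: "rdeg B B (Phi n)" by (rule rdeg_mono[OF rdeg_Phi]) (use p1 in auto)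
  have Du: "rdeg B B (Yp n)" by (rule rdeg_mono[OF rdeg_Yp]) (use p1 in auto)
  have Ns: "rdeg (2 * B) (2 * B) (NsF n)"
  proof -
    have "rdeg (2 * B) (2 * B) (\<lambda>p. 2 * NvF n p * Yp n p)"
      by (rule rdeg_mult'[OF rdeg_cmult[OF Nv] Du]) auto
    moreover have "rdeg (2 * B) (2 * B) (\<lambda>p. Phi n p * DvF n p)" by (rule rdeg_mult'[OF Nu Dv]) auto
    ultimately show ?thesis unfolding NsF_def[abs_def] by (rule rdeg_diff)
  qed
  have Ds: "rdeg (2 * B) (2 * B) (DsF n)" unfolding DsF_def[abs_def] by (rule rdeg_mult'[OF Dv Du]) auto
  have Ds3: "rdeg (2 * B) (2 * B) (\<lambda>p. 3 * DsF n p)" by (rule rdeg_cmult[OF Ds])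
  show Den: "rdeg (4 * B) (4 * B) (DenF n)" unfolding DenF_def[abs_def]
    by (rule rdeg_mult'[OF rdeg_diff[OF Ns Ds3] rdeg_add[OF Ns Ds3]]) auto
  show "rdeg (4 * B) (4 * B) (XnF n)" unfolding XnF_def[abs_def]
  proof (rule rdeg_diff[OF _ Den])
    have "rdeg (2 * B) (2 * B) (\<lambda>p. 4 * NvF n p * Yp n p)"
      by (rule rdeg_mult'[OF rdeg_cmult[OF Nv] Du]) auto
    thus "rdeg (4 * B) (4 * B) (\<lambda>p. 4 * NvF n p * Yp n p * (NsF n p + DsF n p))"
      by (rule rdeg_mult'[OF _ rdeg_add[OF Ns Ds]]) auto
  qed
  show "rdeg (4 * B) (4 * B) (YnF n)" unfolding YnF_def[abs_def]
  proof -
    have "rdeg (2 * B) (2 * B) (\<lambda>p. 8 * NvF n p * DvF n p)"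
      by (rule rdeg_mult'[OF rdeg_cmult[OF Nv] Dv]) auto
    moreover have "rdeg (2 * B) (2 * B) (\<lambda>p. Yp n p ^ 2)" using rdeg_pow[OF Du, of 2] by (simp add: mult.commute)
    ultimately show "rdeg (4 * B) (4 * B) (\<lambda>p. 8 * NvF n p * DvF n p * Yp n p ^ 2)"
      by (rule rdeg_mult') auto
  qed
qed

lemma formula:
  assumes pO: "p \<in> Om1" and pW: "varpi p \<in> Wn n"
  shows "DenF n p \<noteq> 0 \<and> (F_map ^^ n) p = (XnF n p / DenF n p, YnF n p / DenF n p)
    \<and> snd ((F_map ^^ n) p) \<noteq> 0 \<and> psi ((F_map ^^ n) p) = Phi n p / Yp n p"
proof -
  have it: "(F_map ^^ n) p = varpi_inv ((G_map ^^ n) (varpi p))" "(G_map ^^ n) (varpi p) \<in> Om2"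
    using iter_F[OF pO pW] by auto
  have y: "snd p \<noteq> 0" using pO unfolding Om1_def by auto
  define u where "u = fst (varpi p)"
  define v where "v = snd (varpi p)"
  have w: "varpi p = (u, v)" unfolding u_def v_def by simp
  have h3: "\<forall>j<n. (g_map ^^ j) u + 3 \<noteq> 0"
  proof (intro allI impI)
    fix j assume j: "j < n"
    have "(G_map ^^ j) (u, v) \<in> Rset" using pW j w unfolding Wn_def by auto
    hence "(g_map ^^ j) u \<noteq> -3" using Rset_fst[of "(G_map ^^ j) (u, v)"] by (simp add: G_iter)
    thus "(g_map ^^ j) u + 3 \<noteq> 0" by (simp add: add_eq_0_iff2)
  qed
  have AP: "Aprod n u = An n p / Ad n p" "Ad n p \<noteq> 0" using A_Phi[OF y] h3 unfolding u_def by auto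
  have gP: "(g_map ^^ n) u = Phi n p / Yp n p" using g_Phi[OF y] unfolding u_def by simp
  have vv: "v = N2f p / (2 * snd p)" unfolding v_def by (rule varpi_snd)
  have Gn: "(G_map ^^ n) (varpi p) = (Phi n p / Yp n p, NvF n p / DvF n p)"
    unfolding w G_iter gP AP vv NvF_def DvF_def by (simp add: times_divide_times_eq mult.commute mult.left_commute)
  have Dv: "DvF n p \<noteq> 0" using y AP(2) unfolding DvF_def by simp
  have Du: "Yp n p \<noteq> 0" using Yp_nz y by blast
  have O2: "(Phi n p / Yp n p, NvF n p / DvF n p) \<in> Om2" using it(2) Gn by simp
  have s: "2 * (NvF n p / DvF n p) - Phi n p / Yp n p - 3 \<noteq> 0" "2 * (NvF n p / DvF n p) - Phi n p / Yp n p + 3 \<noteq> 0"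
    using O2 unfolding Om2_def by auto
  have vf: "DenF n p \<noteq> 0 \<and> varpi_inv (Phi n p / Yp n p, NvF n p / DvF n p) = (XnF n p / DenF n p, YnF n p / DenF n p)"
    using vinv_formula[OF Dv Du s] unfolding DenF_def XnF_def YnF_def NsF_def DsF_def by simp
  have "snd ((F_map ^^ n) p) \<noteq> 0" using varpi_inv_Om1[OF it(2)] it(1) unfolding Om1_def by auto
  moreover have "psi ((F_map ^^ n) p) = Phi n p / Yp n p"
    using Om2_varpi_inv[OF it(2)] it(1) Gn unfolding psi_varpi by simp
  ultimately show ?thesis using vf it(1) Gn by simp
qed

lemma hg_Wn: "holds_generically (\<lambda>p. p \<in> Om1 \<and> varpi p \<in> Wn n)"
proof (rule hg_transfer)
  show "holds_generically (\<lambda>w. w \<in> Wn n)" unfolding holds_generically_def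
    using open_Wn dense_Wn by blast
qed

lemma alg_deg_witness: "\<exists>cX cY cZ. holds_generically (\<lambda>(x, y).
       hom_eval (2 ^ (n + 6)) cZ x y 1 \<noteq> 0 \<and>
       (F_map ^^ n) (x, y) = (hom_eval (2 ^ (n + 6)) cX x y 1 / hom_eval (2 ^ (n + 6)) cZ x y 1,
                   hom_eval (2 ^ (n + 6)) cY x y 1 / hom_eval (2 ^ (n + 6)) cZ x y 1))"
proof -
  define B where "B = (2::nat) ^ (n + 3)"
  have d: "4 * B + 4 * B = 2 ^ (n + 6)" unfolding B_def by (simp add: power_add)
  obtain cZ where cZ: "\<forall>x y. DenF n (x,y) = hom_eval (4 * B + 4 * B) cZ x y 1"
    using rdeg_hom[OF rdeg_final(1)[of n]] unfolding B_def by blast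
  obtain cX where cX: "\<forall>x y. XnF n (x,y) = hom_eval (4 * B + 4 * B) cX x y 1"
    using rdeg_hom[OF rdeg_final(2)[of n]] unfolding B_def by blast
  obtain cY where cY: "\<forall>x y. YnF n (x,y) = hom_eval (4 * B + 4 * B) cY x y 1"
    using rdeg_hom[OF rdeg_final(3)[of n]] unfolding B_def by blast
  have "holds_generically (\<lambda>(x, y).
       hom_eval (2 ^ (n + 6)) cZ x y 1 \<noteq> 0 \<and>
       (F_map ^^ n) (x, y) = (hom_eval (2 ^ (n + 6)) cX x y 1 / hom_eval (2 ^ (n + 6)) cZ x y 1,
                   hom_eval (2 ^ (n + 6)) cY x y 1 / hom_eval (2 ^ (n + 6)) cZ x y 1))"
  proof (rule hg_mono[OF hg_Wn[of n]])
    fix p assume p: "p \<in> Om1 \<and> varpi p \<in> Wn n"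
    obtain x y where pxy: "p = (x,y)" by fastforce
    show "case p of (x, y) \<Rightarrow> hom_eval (2 ^ (n + 6)) cZ x y 1 \<noteq> 0 \<and>
       (F_map ^^ n) (x, y) = (hom_eval (2 ^ (n + 6)) cX x y 1 / hom_eval (2 ^ (n + 6)) cZ x y 1,
                   hom_eval (2 ^ (n + 6)) cY x y 1 / hom_eval (2 ^ (n + 6)) cZ x y 1)"
      using formula[of p n] p cX cY cZ d pxy by simp
  qed
  hence "\<exists>cX cY cZ. holds_generically (\<lambda>(x, y).
       hom_eval (2 ^ (n + 6)) cZ x y 1 \<noteq> 0 \<and>
       (F_map ^^ n) (x, y) = (hom_eval (2 ^ (n + 6)) cX x y 1 / hom_eval (2 ^ (n + 6)) cZ x y 1,
                   hom_eval (2 ^ (n + 6)) cY x y 1 / hom_eval (2 ^ (n + 6)) cZ x y 1))" by blast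
  thus ?thesis .
qed

lemma alg_deg_upper: "alg_deg (F_map ^^ n) \<le> 2 ^ (n + 6)"
  unfolding alg_deg_def by (rule Least_le, rule alg_deg_witness)

lemma alg_deg_ex: "\<exists>cX cY cZ. holds_generically (\<lambda>(x, y).
       hom_eval (alg_deg (F_map ^^ n)) cZ x y 1 \<noteq> 0 \<and>
       (F_map ^^ n) (x, y) = (hom_eval (alg_deg (F_map ^^ n)) cX x y 1 / hom_eval (alg_deg (F_map ^^ n)) cZ x y 1,
                   hom_eval (alg_deg (F_map ^^ n)) cY x y 1 / hom_eval (alg_deg (F_map ^^ n)) cZ x y 1))"
  unfolding alg_deg_def by (rule LeastI_ex, rule exI, rule alg_deg_witness)

lemma cont_Yp: "continuous_on UNIV (Yp k)"
  unfolding Yp_def[abs_def] by (intro continuous_intros)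

lemma cont_Phi: "continuous_on UNIV (Phi k)"
proof (induction k)
  case 0 show ?case unfolding Phi.simps N1f_def[abs_def] by (intro continuous_intros)
next
  case (Suc k)
  have e: "Phi (Suc k) = (\<lambda>p. Phi k p ^ 2 - Yp k p * Phi k p - 3 * Yp (Suc k) p)" by (rule ext) simp
  show ?case unfolding e by (intro continuous_intros Suc cont_Yp)
qed

lemma cont_hom: "continuous_on UNIV (\<lambda>p. hom_eval d c (fst p) (snd p) 1)"
  unfolding hom_eval_def by (intro continuous_intros)

lemma Phi_y0: "Phi k (x, 0) = (x^2 - 1) ^ (2 ^ k)"
  by (induction k) (simp_all add: N1f_def Yp_def power_mult[symmetric] mult.commute power_0_left)

lemma hg_x: "holds_generically (\<lambda>p::complex \<times> complex. fst p ^ 2 \<noteq> 1)"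
  unfolding holds_generically_def
proof (intro exI conjI)
  show "open {p::complex \<times> complex. fst p ^ 2 \<noteq> 1}" by (intro open_Collect_neq continuous_intros)
  show "closure {p::complex \<times> complex. fst p ^ 2 \<noteq> 1} = UNIV"
  proof (rule dense_lines[of "{1, -1}"])
    fix a :: complex assume "a \<notin> {1, -1}"
    hence "a ^ 2 \<noteq> 1" by (auto simp: power2_eq_1_iff)
    thus "finite {b. (a, b) \<notin> {p. fst p ^ 2 \<noteq> 1}}" by simp
  qed auto
  show "\<forall>p\<in>{p::complex \<times> complex. fst p ^ 2 \<noteq> 1}. fst p ^ 2 \<noteq> 1" by simp
qed

lemma psi_frac:
  fixes X Y Z :: complex
  assumes "Z \<noteq> 0" "Y \<noteq> 0"
  shows "psi (X / Z, Y / Z) = (X^2 - Z^2 - X * Y - 2 * Y^2) / (Y * Z)"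
  using assms unfolding psi_def by (simp add: field_simps power2_eq_square)

lemma alg_deg_lower: "2 ^ n \<le> 2 * alg_deg (F_map ^^ n)"
proof -
  define d where "d = alg_deg (F_map ^^ n)"
  obtain cX cY cZ where H: "holds_generically (\<lambda>(x, y). hom_eval d cZ x y 1 \<noteq> 0 \<and>
       (F_map ^^ n) (x, y) = (hom_eval d cX x y 1 / hom_eval d cZ x y 1, hom_eval d cY x y 1 / hom_eval d cZ x y 1))"
    using alg_deg_ex[of n] unfolding d_def by blast
  define hx where "hx p = hom_eval d cX (fst p) (snd p) 1" for p
  define hy where "hy p = hom_eval d cY (fst p) (snd p) 1" for p
  define hz where "hz p = hom_eval d cZ (fst p) (snd p) 1" for p
  have H': "holds_generically (\<lambda>p. hz p \<noteq> 0 \<and> (F_map ^^ n) p = (hx p / hz p, hy p / hz p))"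
    by (rule hg_mono[OF H]) (auto simp: hx_def hy_def hz_def)
  have "holds_generically (\<lambda>p. (hz p \<noteq> 0 \<and> (F_map ^^ n) p = (hx p / hz p, hy p / hz p)) \<and>
      ((p \<in> Om1 \<and> varpi p \<in> Wn n) \<and> fst p ^ 2 \<noteq> 1))"
    by (intro hg_conj H' hg_Wn hg_x)
  then obtain U where U: "open U" "closure U = UNIV"
    "\<forall>p\<in>U. (hz p \<noteq> 0 \<and> (F_map ^^ n) p = (hx p / hz p, hy p / hz p)) \<and> ((p \<in> Om1 \<and> varpi p \<in> Wn n) \<and> fst p ^ 2 \<noteq> 1)"
    unfolding holds_generically_def by blast
  define Q where "Q p = hx p ^ 2 - hz p ^ 2 - hx p * hy p - 2 * hy p ^ 2" for p
  have ptU: "hz p \<noteq> 0 \<and> hy p \<noteq> 0 \<and> Q p * Yp n p = Phi n p * hy p * hz p" if p: "p \<in> U" for p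
  proof -
    have a: "hz p \<noteq> 0" "(F_map ^^ n) p = (hx p / hz p, hy p / hz p)" "p \<in> Om1" "varpi p \<in> Wn n"
      using U(3) p by auto
    have f: "snd ((F_map ^^ n) p) \<noteq> 0" "psi ((F_map ^^ n) p) = Phi n p / Yp n p"
      using formula[OF a(3,4)] by auto
    have hy0: "hy p \<noteq> 0" using f(1) a(2) by auto
    have Y0: "Yp n p \<noteq> 0" using Yp_nz a(3) unfolding Om1_def by (cases p) auto
    have "Q p / (hy p * hz p) = Phi n p / Yp n p" using f(2) a(2) psi_frac[OF a(1) hy0] unfolding Q_def by simp
    hence "Q p * Yp n p = Phi n p * (hy p * hz p)" using hy0 a(1) Y0 by (simp add: frac_eq_eq)
    thus ?thesis using a(1) hy0 by (simp add: mult.assoc)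
  qed
  have idall: "Q p * Yp n p = Phi n p * hy p * hz p" for p
  proof -
    have cl: "closed {p. Q p * Yp n p = Phi n p * hy p * hz p}"
      unfolding Q_def hx_def hy_def hz_def
      by (intro closed_Collect_eq continuous_intros cont_hom cont_Phi cont_Yp)
    have "U \<subseteq> {p. Q p * Yp n p = Phi n p * hy p * hz p}" using ptU by blast
    hence "closure U \<subseteq> {p. Q p * Yp n p = Phi n p * hy p * hz p}" using cl closure_minimal by blast
    thus ?thesis using U(2) by blast
  qed
  have "U \<noteq> {}" using U(2) by auto
  then obtain p0 where p0: "p0 \<in> U" by blast
  obtain \<alpha> t0 where p0e: "p0 = (\<alpha>, t0)" by fastforce
  have al: "\<alpha> ^ 2 \<noteq> 1" using U(3) p0 p0e by auto
  have hz0: "hz (\<alpha>, t0) \<noteq> 0" and hy0: "hy (\<alpha>, t0) \<noteq> 0" using ptU[OF p0] p0e by auto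
  obtain qx where qx: "degree qx \<le> d" "\<forall>t. hom_eval d cX \<alpha> t 1 = poly qx t" using hom_line by blast
  obtain qy where qy: "degree qy \<le> d" "\<forall>t. hom_eval d cY \<alpha> t 1 = poly qy t" using hom_line by blast
  obtain qz where qz: "degree qz \<le> d" "\<forall>t. hom_eval d cZ \<alpha> t 1 = poly qz t" using hom_line by blast
  obtain qP where qP: "\<forall>t. Phi n (\<alpha>, t) = poly qP t" using rdeg_line[OF rdeg_Phi] by blast
  define L where "L = (qx ^ 2 - qz ^ 2 - qx * qy - smult 2 (qy ^ 2)) * monom 1 (2 ^ n)"
  define R where "R = qP * qy * qz"
  have "poly L = poly R"
  proof
    fix t
    have "poly L t = Q (\<alpha>, t) * Yp n (\<alpha>, t)"
      unfolding L_def Q_def hx_def hy_def hz_def Yp_def using qx(2) qy(2) qz(2)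
      by (simp add: poly_monom)
    also have "\<dots> = Phi n (\<alpha>, t) * hy (\<alpha>, t) * hz (\<alpha>, t)" by (rule idall)
    also have "\<dots> = poly R t" unfolding R_def hy_def hz_def using qP qy(2) qz(2) by simp
    finally show "poly L t = poly R t" .
  qed
  hence LR: "L = R" by (simp add: poly_eq_poly_eq_iff)
  have al': "(\<alpha> ^ 2 - 1) ^ (2 ^ n) \<noteq> 0" using al by simp
  have qP0: "poly qP 0 \<noteq> 0" using qP[rule_format, of 0] Phi_y0[of n \<alpha>] al' by simp
  have qy0: "qy \<noteq> 0" using qy(2) hy0 unfolding hy_def by auto
  have qz0: "qz \<noteq> 0" using qz(2) hz0 unfolding hz_def by auto
  have qPn: "qP \<noteq> 0" using qP0 by auto
  have R0: "R \<noteq> 0" unfolding R_def using qy0 qz0 qPn by simp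
  have oP: "order 0 qP = 0" using qP0 order_root by blast
  have "order 0 R = order 0 qP + order 0 qy + order 0 qz"
    unfolding R_def using R0 unfolding R_def by (simp add: order_mult)
  also have "\<dots> \<le> 2 * d" using oP order_degree[OF qy0, of 0] order_degree[OF qz0, of 0] qy(1) qz(1) by simp
  finally have oR: "order 0 R \<le> 2 * d" .
  have L0: "L \<noteq> 0" using LR R0 by simp
  have "order 0 L = order 0 (qx ^ 2 - qz ^ 2 - qx * qy - smult 2 (qy ^ 2)) + order 0 (monom (1::complex) (2 ^ n))"
    using L0 unfolding L_def by (rule order_mult)
  hence "2 ^ n \<le> order 0 L" by simp
  thus ?thesis using LR oR unfolding d_def by simp
qed

lemma lambda_limit: "(\<lambda>n. root n (real (alg_deg (F_map ^^ n)))) \<longlonglongrightarrow> 2"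
proof (rule tendsto_sandwich[where f = "\<lambda>n. 2 / root n 2" and h = "\<lambda>n. root n 64 * 2"])
  show "\<forall>\<^sub>F n in sequentially. 2 / root n 2 \<le> root n (real (alg_deg (F_map ^^ n)))"
  proof (rule eventually_sequentiallyI[of 1])
    fix n :: nat assume n: "1 \<le> n"
    have "2 ^ n \<le> 2 * alg_deg (F_map ^^ n)" by (rule alg_deg_lower)
    hence "(2::real) ^ n \<le> 2 * real (alg_deg (F_map ^^ n))" by (metis of_nat_le_iff of_nat_mult of_nat_numeral of_nat_power)
    hence le: "(2::real) ^ n / 2 \<le> real (alg_deg (F_map ^^ n))" by simp
    have "root n ((2::real) ^ n / 2) = 2 / root n 2" using n by (simp add: real_root_divide real_root_power_cancel)
    thus "2 / root n 2 \<le> root n (real (alg_deg (F_map ^^ n)))" using le n by (metis real_root_le_iff not_one_le_zero neq0_conv le_zero_eq)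
  qed
  show "\<forall>\<^sub>F n in sequentially. root n (real (alg_deg (F_map ^^ n))) \<le> root n 64 * 2"
  proof (rule eventually_sequentiallyI[of 1])
    fix n :: nat assume n: "1 \<le> n"
    have "alg_deg (F_map ^^ n) \<le> 64 * 2 ^ n" using alg_deg_upper[of n] by (simp add: power_add mult.commute)
    hence le: "real (alg_deg (F_map ^^ n)) \<le> 64 * 2 ^ n" by (metis of_nat_le_iff of_nat_mult of_nat_numeral of_nat_power)
    have "root n (64 * (2::real) ^ n) = root n 64 * 2" using n by (simp add: real_root_mult real_root_power_cancel)
    thus "root n (real (alg_deg (F_map ^^ n))) \<le> root n 64 * 2" using le n by (metis real_root_le_iff not_one_le_zero neq0_conv le_zero_eq)
  qed
  show "(\<lambda>n. 2 / root n 2) \<longlonglongrightarrow> 2"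
    using tendsto_divide[OF tendsto_const LIMSEQ_root_const[of 2]] by simp
  show "(\<lambda>n. root n 64 * 2) \<longlonglongrightarrow> 2"
    using tendsto_mult[OF LIMSEQ_root_const[of 64] tendsto_const[of 2]] by simp
qed

lemma hg_S4: "holds_generically (\<lambda>p. psi (F_map p) = g_map (psi p))"
proof (rule hg_lines[where S = "{p. snd p \<noteq> 0} \<inter> {p. fst p - 1 - snd p \<noteq> 0} \<inter> {p. fst p ^ 2 - 1 + snd p - snd p ^ 2 \<noteq> 0} \<inter> {p. fst p - 1 + snd p \<noteq> 0}" and B = "{}"])
  show "open ({p. snd p \<noteq> 0} \<inter> {p. fst p - 1 - snd p \<noteq> 0} \<inter> {p. fst p ^ 2 - 1 + snd p - snd p ^ 2 \<noteq> 0} \<inter> {p::complex\<times>complex. fst p - 1 + snd p \<noteq> 0})"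
    by (intro open_Int open_Collect_neq continuous_intros)
next
  fix a :: complex
  have "{b. (a, b) \<notin> {p. snd p \<noteq> 0} \<inter> {p. fst p - 1 - snd p \<noteq> 0} \<inter> {p. fst p ^ 2 - 1 + snd p - snd p ^ 2 \<noteq> 0} \<inter> {p. fst p - 1 + snd p \<noteq> 0}}
     = {b. b = 0} \<union> {b. a - 1 - b = 0} \<union> {b. a ^ 2 - 1 + b - b ^ 2 = 0} \<union> {b. a - 1 + b = 0}" by auto
  moreover have "finite {b. a - 1 - b = 0}" by (rule aff_fin[where c = "-1" and d = "a - 1"]) auto
  moreover have "finite {b. a - 1 + b = 0}" by (rule aff_fin[where c = "1" and d = "a - 1"]) auto
  moreover have "finite {b. a ^ 2 - 1 + b - b ^ 2 = 0}" by (rule quad_fin[where c = "-1" and b = 1 and d = "a^2 - 1"]) auto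
  ultimately show "finite {b. (a, b) \<notin> {p. snd p \<noteq> 0} \<inter> {p. fst p - 1 - snd p \<noteq> 0} \<inter> {p. fst p ^ 2 - 1 + snd p - snd p ^ 2 \<noteq> 0} \<inter> {p. fst p - 1 + snd p \<noteq> 0}}"
    by simp
next
  fix p :: "complex \<times> complex"
  assume "p \<in> {p. snd p \<noteq> 0} \<inter> {p. fst p - 1 - snd p \<noteq> 0} \<inter> {p. fst p ^ 2 - 1 + snd p - snd p ^ 2 \<noteq> 0} \<inter> {p. fst p - 1 + snd p \<noteq> 0}"
  thus "psi (F_map p) = g_map (psi p)" using F_conj_fst[of "snd p" "fst p"] unfolding psi_varpi by (cases p) auto
qed simp

theorem theorem7p1:
  shows "holds_generically (\<lambda>p. varpi (varpi_inv p) = p)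
       \<and> holds_generically (\<lambda>p. varpi_inv (varpi p) = p)
       \<and> holds_generically (\<lambda>p. varpi (F_map (varpi_inv p)) = G_map p)
       \<and> holds_generically (\<lambda>p. psi (F_map p) = g_map (psi p))
       \<and> holds_generically (\<lambda>p. card {q \<in> F_dom. F_map q = p} = 2)
       \<and> (\<lambda>n. root n (real (alg_deg (F_map ^^ n)))) \<longlonglongrightarrow> 2"
proof (intro conjI)
  show "holds_generically (\<lambda>p. varpi (varpi_inv p) = p)" unfolding holds_generically_def
    using open_Om2 dense_Om2 Om2_varpi_inv by blast
  show "holds_generically (\<lambda>p. varpi_inv (varpi p) = p)" unfolding holds_generically_def
    using open_Om1 dense_Om1 Om1_varpi by blast
  show "holds_generically (\<lambda>p. varpi (F_map (varpi_inv p)) = G_map p)" unfolding holds_generically_def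
  proof (intro exI conjI)
    show "open Rset" "closure Rset = UNIV" by (rule open_Rset, rule dense_Rset)
    show "\<forall>p\<in>Rset. varpi (F_map (varpi_inv p)) = G_map p"
    proof
      fix p assume p: "p \<in> Rset"
      obtain u v where uv: "p = (u,v)" by fastforce
      show "varpi (F_map (varpi_inv p)) = G_map p" using F_step[of u v] p uv Om2_varpi_inv by simp
    qed
  qed
  show "holds_generically (\<lambda>p. psi (F_map p) = g_map (psi p))" by (rule hg_S4)
  show "holds_generically (\<lambda>p. card {q \<in> F_dom. F_map q = p} = 2)"
  proof (rule hg_mono[OF hg_transfer[of "\<lambda>w. w \<in> W5"]])
    show "holds_generically (\<lambda>w. w \<in> W5)" unfolding holds_generically_def
      using open_W5 dense_W5 by blast
  qed (use card_pre in blast)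
  show "(\<lambda>n. root n (real (alg_deg (F_map ^^ n)))) \<longlonglongrightarrow> 2" by (rule lambda_limit)
qed

end
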